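(* (a) Suppose that for every $y_0\in Y$ the limit $V(y_0):=\lim_{T\to\infty}V_T(y_0)$ exists, and that the function $V(\cdot)$ is continuous on $Y$. Then $V(y_0)=d^*(y_0)$ for all $y_0\in Y$. (b) Suppose that for every $y_0\in Y$ the limit $h(y_0):=\lim_{\alpha\to1}h_\alpha(y_0)$ exists, and that $h(\cdot)$ is continuous on $Y$. Then $h(y_0)=d^*(y_0)$ for all $y_0\in Y$.
   Context: Let $Y\subset\mathbb{R}^m$ be nonempty compact, $U_0$ a compact metric space, $U(\cdot):Y\rightsquigarrow U_0$ upper semicontinuous and compact-valued, and $f:\mathbb{R}^m\times U_0\to\mathbb{R}^m$, $k:\mathbb{R}^m\times U_0\to\mathbb{R}$ continuous. Put $A(y):=\{u\in U(y): f(y,u)\in Y\}$ and $G:=\{(y,u):y\in Y,\ u\in A(y)\}$. Standing assumption: $A(y)\ne\emptyset$ for all $y\in Y$. For $y_0\in Y$, an admissible process on $\{0,\dots,T-1\}$ (respectively on $\{0,1,\dots\}$) is a pair $(y(t),u(t))$ with $y(0)=y_0$, $u(t)\in A(y(t))$ and $y(t+1)=f(y(t),u(t))$. The controls form $\mathcal U_T(y_0)$ (respectively $\mathcal U(y_0)$). Value functions: $$V_T(y_0):=\frac1T\min_{u\in\mathcal U_T(y_0)}\sum_{t=0}^{T-1}k(y(t),u(t)),\qquad h_\alpha(y_0):=(1-\alpha)\min_{u\in\mathcal U(y_0)}\sum_{t=0}^\infty\alpha^tk(y(t),u(t)).$$ Dual value: $d^*(y_0):=\sup\mu$, where the supremum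 is over triples $(\mu,\psi,\eta)\in\mathbb{R}\times C(Y)\times C(Y)$ with, for all $(y,u)\in G$: $$k(y,u)+\psi(y_0)-\psi(y)+\eta(f(y,u))-\eta(y)-\mu\ge0,\qquad\psi(f(y,u))-\psi(y)\ge0.$$ *)

theory Defs
  imports "HOL-Analysis.Analysis"
begin

definition usc_on :: "'a::metric_space set \<Rightarrow> ('a \<Rightarrow> 'u::topological_space set) \<Rightarrow> bool" where
  "usc_on Y U \<longleftrightarrow> (\<forall>y\<in>Y. \<forall>W. open W \<and> U y \<subseteq> W \<longrightarrow>
      (\<exists>\<delta>>0. \<forall>y'\<in>Y. dist y' y < \<delta> \<longrightarrow> U y' \<subseteq> W))"

definition adm :: "'a set \<Rightarrow> ('a \<Rightarrow> 'u set) \<Rightarrow> ('a \<Rightarrow> 'u \<Rightarrow> 'a) \<Rightarrow> 'a \<Rightarrow> 'u set" where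
  "adm Y U f y = {u \<in> U y. f y u \<in> Y}"

definition graphG :: "'a set \<Rightarrow> ('a \<Rightarrow> 'u set) \<Rightarrow> ('a \<Rightarrow> 'u \<Rightarrow> 'a) \<Rightarrow> ('a \<times> 'u) set" where
  "graphG Y U f = {(y, u). y \<in> Y \<and> u \<in> adm Y U f y}"

fun traj :: "('a \<Rightarrow> 'u \<Rightarrow> 'a) \<Rightarrow> 'a \<Rightarrow> (nat \<Rightarrow> 'u) \<Rightarrow> nat \<Rightarrow> 'a" where
  "traj f y0 u 0 = y0"
| "traj f y0 u (Suc t) = f (traj f y0 u t) (u t)"

definition UT :: "'a set \<Rightarrow> ('a \<Rightarrow> 'u set) \<Rightarrow> ('a \<Rightarrow> 'u \<Rightarrow> 'a) \<Rightarrow> nat \<Rightarrow> 'a \<Rightarrow> (nat \<Rightarrow> 'u) set" where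
  "UT Y U f T y0 = {u. \<forall>t<T. u t \<in> adm Y U f (traj f y0 u t)}"

definition Uinf :: "'a set \<Rightarrow> ('a \<Rightarrow> 'u set) \<Rightarrow> ('a \<Rightarrow> 'u \<Rightarrow> 'a) \<Rightarrow> 'a \<Rightarrow> (nat \<Rightarrow> 'u) set" where
  "Uinf Y U f y0 = {u. \<forall>t. u t \<in> adm Y U f (traj f y0 u t)}"

text \<open>Finite-horizon average value V_T (the minimum is rendered as an infimum; it is attained).\<close>
definition VT :: "'a set \<Rightarrow> ('a \<Rightarrow> 'u set) \<Rightarrow> ('a \<Rightarrow> 'u \<Rightarrow> 'a) \<Rightarrow> ('a \<Rightarrow> 'u \<Rightarrow> real)
     \<Rightarrow> nat \<Rightarrow> 'a \<Rightarrow> real" where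
  "VT Y U f k T y0 = (1 / real T) *
     (INF u \<in> UT Y U f T y0. (\<Sum>t<T. k (traj f y0 u t) (u t)))"

text \<open>Discounted value h_alpha (the minimum is rendered as an infimum; it is attained).\<close>
definition h_disc :: "'a set \<Rightarrow> ('a \<Rightarrow> 'u set) \<Rightarrow> ('a \<Rightarrow> 'u \<Rightarrow> 'a) \<Rightarrow> ('a \<Rightarrow> 'u \<Rightarrow> real)
     \<Rightarrow> real \<Rightarrow> 'a \<Rightarrow> real" where
  "h_disc Y U f k \<alpha> y0 = (1 - \<alpha>) *
     (INF u \<in> Uinf Y U f y0. (\<Sum>t. \<alpha> ^ t * k (traj f y0 u t) (u t)))"

definition dstar :: "'a::topological_space set \<Rightarrow> ('a \<Rightarrow> 'u set) \<Rightarrow> ('a \<Rightarrow> 'u \<Rightarrow> 'a) \<Rightarrow> ('a \<Rightarrow> 'u \<Rightarrow> real)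
     \<Rightarrow> 'a \<Rightarrow> real" where
  "dstar Y U f k y0 = Sup {\<mu>. \<exists>\<psi> \<eta>. continuous_on Y \<psi> \<and> continuous_on Y \<eta> \<and>
      (\<forall>(y, u) \<in> graphG Y U f.
          k y u + \<psi> y0 - \<psi> y + \<eta> (f y u) - \<eta> y - \<mu> \<ge> 0 \<and> \<psi> (f y u) - \<psi> y \<ge> 0)}"

end

theory Submission
  imports Defs "HOL-Library.Diagonal_Subsequence"
begin

lemma diag_compact:
  fixes s :: "nat \<Rightarrow> nat \<Rightarrow> 'b::metric_space"
  assumes K: "compact K" and sK: "\<And>j t. s j t \<in> K"
  shows "\<exists>r q. strict_mono r \<and> (\<forall>t. (\<lambda>j. s (r j) t) \<longlonglongrightarrow> q t \<and> q t \<in> K)"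
proof -
  interpret subseqs "\<lambda>n r. \<exists>l. (\<lambda>j. s (r j) n) \<longlonglongrightarrow> l"
  proof
    fix n and r :: "nat \<Rightarrow> nat"
    assume "strict_mono r"
    have "\<forall>j. (\<lambda>j. s (r j) n) j \<in> K" using sK by auto
    then obtain l r' where "l \<in> K" "strict_mono r'" "((\<lambda>j. s (r j) n) \<circ> r') \<longlonglongrightarrow> l"
      using compact_imp_seq_compact[OF K] unfolding seq_compact_def by metis
    thus "\<exists>r'. strict_mono r' \<and> (\<exists>l. (\<lambda>j. s ((r \<circ> r') j) n) \<longlonglongrightarrow> l)"
      by (auto simp: o_def)
  qed
  have conv: "\<exists>l. (\<lambda>j. s (diagseq j) t) \<longlonglongrightarrow> l" for t
  proof -
    obtain l where "(\<lambda>j. s ((diagseq o (+) (Suc t)) j) t) \<longlonglongrightarrow> l"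
    proof (atomize_elim, rule diagseq_holds)
      fix r s' n
      assume "strict_mono (r :: nat \<Rightarrow> nat)"
      assume "\<exists>l. (\<lambda>j. s (s' j) n) \<longlonglongrightarrow> l"
      then obtain l where "((\<lambda>j. s j n) o s') \<longlonglongrightarrow> l"
        by (auto simp: o_def)
      hence "((\<lambda>j. s j n) o s' o r) \<longlonglongrightarrow> l" using \<open>strict_mono r\<close>
        by (rule LIMSEQ_subseq_LIMSEQ)
      thus "\<exists>l. (\<lambda>j. s ((s' \<circ> r) j) n) \<longlonglongrightarrow> l" by (auto simp add: o_def)
    qed
    hence "(\<lambda>j. s (diagseq (j + Suc t)) t) \<longlonglongrightarrow> l" by (simp add: ac_simps)
    hence "(\<lambda>j. s (diagseq j) t) \<longlonglongrightarrow> l" by (rule LIMSEQ_offset)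
    thus ?thesis ..
  qed
  define q where "q t = lim (\<lambda>j. s (diagseq j) t)" for t
  have lim: "(\<lambda>j. s (diagseq j) t) \<longlonglongrightarrow> q t" for t
    using conv[of t] unfolding q_def convergent_LIMSEQ_iff[symmetric] convergent_def by blast
  have "q t \<in> K" for t
    by (rule closed_sequentially[OF compact_imp_closed[OF K] _ lim[of t]]) (simp add: sK)
  thus ?thesis using lim subseq_diagseq by blast
qed



locale setting =
  fixes Y :: "'a::euclidean_space set" and U0 :: "'u::metric_space set"
    and U :: "'a \<Rightarrow> 'u set" and f :: "'a \<Rightarrow> 'u \<Rightarrow> 'a" and k :: "'a \<Rightarrow> 'u \<Rightarrow> real"
  assumes Yne: "Y \<noteq> {}" and cY: "compact Y" and cU0: "compact U0"
    and Usub: "\<forall>y\<in>Y. U y \<subseteq> U0 \<and> compact (U y)"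
    and usc: "usc_on Y U"
    and fc: "continuous_on (UNIV \<times> U0) (\<lambda>(y, u). f y u)"
    and kc: "continuous_on (UNIV \<times> U0) (\<lambda>(y, u). k y u)"
    and admne: "\<forall>y\<in>Y. adm Y U f y \<noteq> {}"
begin

abbreviation "G \<equiv> graphG Y U f"

lemma memG: "(y, u) \<in> G \<longleftrightarrow> y \<in> Y \<and> u \<in> U y \<and> f y u \<in> Y"
  by (auto simp: graphG_def adm_def)

lemma G_sub: "G \<subseteq> Y \<times> U0"
  using Usub by (auto simp: graphG_def adm_def)

lemma fG: "continuous_on G (\<lambda>p. f (fst p) (snd p))"
  using continuous_on_subset[OF fc] G_sub by (auto simp: case_prod_beta')

lemma kG: "continuous_on G (\<lambda>p. k (fst p) (snd p))"
  using continuous_on_subset[OF kc] G_sub by (auto simp: case_prod_beta')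

lemma G_closed: "closed G"
  unfolding closed_sequential_limits
proof (intro allI impI, elim conjE)
  fix s :: "nat \<Rightarrow> 'a \<times> 'u" and l
  assume sG: "\<forall>n. s n \<in> G" and lim: "s \<longlonglongrightarrow> l"
  obtain y u where l: "l = (y, u)" by (cases l)
  have ly: "(\<lambda>n. fst (s n)) \<longlonglongrightarrow> y" using tendsto_fst[OF lim] l by simp
  have lu: "(\<lambda>n. snd (s n)) \<longlonglongrightarrow> u" using tendsto_snd[OF lim] l by simp
  have sY: "fst (s n) \<in> Y" for n using sG[rule_format, of n] by (cases "s n") (auto simp: memG)
  have sU: "snd (s n) \<in> U (fst (s n))" for n using sG[rule_format, of n] by (cases "s n") (auto simp: memG)
  have yY: "y \<in> Y"
    using closed_sequentially[OF compact_imp_closed[OF cY] _ ly] sY by blast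
  have sU0: "snd (s n) \<in> U0" for n using sU sY Usub by blast
  have uU0: "u \<in> U0"
    using closed_sequentially[OF compact_imp_closed[OF cU0] _ lu] sU0 by blast
  have lG: "l \<in> Y \<times> U0" using yY uU0 l by simp
  have sYU: "s n \<in> Y \<times> U0" for n using sY[of n] sU0[of n] by (simp add: mem_Times_iff)
  have uUy: "u \<in> U y"
  proof (rule ccontr)
    assume nu: "u \<notin> U y"
    have "closed (U y)" using Usub yY compact_imp_closed by blast
    then have "open (- U y)" by auto
    then obtain e where e: "e > 0" "ball u e \<subseteq> - U y"
      using nu open_contains_ball by blast
    define W where "W = - cball u (e/2)"
    have oW: "open W" unfolding W_def by auto
    have UW: "U y \<subseteq> W" using e unfolding W_def by (auto simp: subset_iff)
    obtain d where d: "d > 0" "\<forall>y'\<in>Y. dist y' y < d \<longrightarrow> U y' \<subseteq> W"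
      using usc yY oW UW unfolding usc_on_def by blast
    have "\<forall>\<^sub>F n in sequentially. dist (fst (s n)) y < d" using ly d(1) tendstoD by blast
    moreover have "\<forall>\<^sub>F n in sequentially. dist (snd (s n)) u < e/2" using tendstoD[OF lu, of "e/2"] e(1) by simp
    ultimately have "\<forall>\<^sub>F n in sequentially. False"
    proof eventually_elim
      case (elim n)
      then have "snd (s n) \<in> W" using d(2) sY sU by blast
      then show False using elim unfolding W_def by (simp add: dist_commute)
    qed
    then show False by simp
  qed
  have "(\<lambda>n. f (fst (s n)) (snd (s n))) \<longlonglongrightarrow> f y u"
    using continuous_on_tendsto_compose[OF fc lim] lG sYU l by (simp add: case_prod_beta' mem_Times_iff)
  moreover have "f (fst (s n)) (snd (s n)) \<in> Y" for n using sG[rule_format, of n] by (cases "s n") (auto simp: memG)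
  ultimately have "f y u \<in> Y"
    using closed_sequentially[OF compact_imp_closed[OF cY], of "\<lambda>n. f (fst (s n)) (snd (s n))"] by blast
  then show "l \<in> G" using l yY uUy by (simp add: memG)
qed

lemma G_compact: "compact G"
proof -
  have "compact ((Y \<times> U0) \<inter> G)" by (rule compact_Int_closed[OF compact_Times[OF cY cU0] G_closed])
  moreover have "(Y \<times> U0) \<inter> G = G" using G_sub by blast
  ultimately show ?thesis by simp
qed

lemma kbound: "\<exists>K. \<forall>p\<in>G. \<bar>k (fst p) (snd p)\<bar> \<le> K"
proof -
  have "compact ((\<lambda>p. k (fst p) (snd p)) ` G)" by (rule compact_continuous_image[OF kG G_compact])
  then obtain K where "\<forall>x\<in>(\<lambda>p. k (fst p) (snd p)) ` G. norm x \<le> K"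
    using compact_imp_bounded bounded_iff by metis
  thus ?thesis by (intro exI[of _ K]) simp
qed

lemma k_tendsto:
  assumes "(s \<longlonglongrightarrow> p)" "p \<in> G" "\<And>n. s n \<in> G"
  shows "(\<lambda>n. k (fst (s n)) (snd (s n))) \<longlonglongrightarrow> k (fst p) (snd p)"
  using continuous_on_tendsto_compose[OF kG assms(1,2)] assms(3) by simp

lemma f_tendsto:
  assumes "(s \<longlonglongrightarrow> p)" "p \<in> G" "\<And>n. s n \<in> G"
  shows "(\<lambda>n. f (fst (s n)) (snd (s n))) \<longlonglongrightarrow> f (fst p) (snd p)"
  using continuous_on_tendsto_compose[OF fG assms(1,2)] assms(3) by simp

end


lemma sum_add_split: "(\<Sum>t<m+n. h t) = (\<Sum>t<m. h t) + (\<Sum>t<n. h (m+t))"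
  for h :: "nat \<Rightarrow> real"
  by (induction n) (auto simp: add.assoc)

lemma lim_eq_dist0:
  fixes a b :: "nat \<Rightarrow> 'b::metric_space"
  assumes "a \<longlonglongrightarrow> A" "b \<longlonglongrightarrow> B" "(\<lambda>j. dist (a j) (b j)) \<longlonglongrightarrow> 0"
  shows "A = B"
proof -
  have "(\<lambda>j. dist (a j) (b j)) \<longlonglongrightarrow> dist A B" using tendsto_dist[OF assms(1,2)] .
  with assms(3) have "dist A B = 0" using LIMSEQ_unique by blast
  thus ?thesis by simp
qed

lemma inv_sub_tendsto:
  assumes "strict_mono r" "\<And>j. d j \<le> inverse (real (Suc (r j)))" "\<And>j. 0 \<le> d j"
  shows "(d :: nat \<Rightarrow> real) \<longlonglongrightarrow> 0"
proof (rule Lim_null_comparison[where g="\<lambda>j. inverse (real (Suc (r j)))"])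
  show "\<forall>\<^sub>F j in sequentially. norm (d j) \<le> inverse (real (Suc (r j)))" using assms by auto
  show "(\<lambda>j. inverse (real (Suc (r j)))) \<longlonglongrightarrow> 0"
    using LIMSEQ_subseq_LIMSEQ[OF LIMSEQ_inverse_real_of_nat assms(1)] by (simp add: o_def)
qed

context setting begin

definition pseudo :: "nat \<Rightarrow> (nat \<Rightarrow> 'a) \<Rightarrow> (nat \<Rightarrow> 'u) \<Rightarrow> real \<Rightarrow> bool" where
  "pseudo N x v d \<longleftrightarrow> (\<forall>t<N. (x t, v t) \<in> G) \<and> (\<forall>t. Suc t < N \<longrightarrow> dist (x (Suc t)) (f (x t) (v t)) \<le> d)"

lemma traj_Y:
  assumes "y0 \<in> Y" "\<forall>t<T. u t \<in> adm Y U f (traj f y0 u t)" "t \<le> T"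
  shows "traj f y0 u t \<in> Y"
  using assms(3) proof (induction t)
  case 0 then show ?case using assms(1) by simp
next
  case (Suc t) then show ?case using assms(2) by (auto simp: adm_def)
qed

lemma UT_iff: "y0 \<in> Y \<Longrightarrow> u \<in> UT Y U f T y0 \<longleftrightarrow> (\<forall>t<T. (traj f y0 u t, u t) \<in> G)"
  using traj_Y[of y0 T u] unfolding UT_def graphG_def by auto

lemma Uinf_iff: "y0 \<in> Y \<Longrightarrow> u \<in> Uinf Y U f y0 \<longleftrightarrow> (\<forall>t. (traj f y0 u t, u t) \<in> G)"
proof -
  assume y0: "y0 \<in> Y"
  have "u \<in> Uinf Y U f y0 \<longleftrightarrow> (\<forall>T. u \<in> UT Y U f T y0)" unfolding Uinf_def UT_def by auto
  also have "\<dots> \<longleftrightarrow> (\<forall>t. (traj f y0 u t, u t) \<in> G)" using UT_iff[OF y0] by (meson lessI less_trans)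
  finally show ?thesis .
qed

lemma trajG_Y: "(\<forall>t<T. (traj f y0 u t, u t) \<in> G) \<Longrightarrow> y0 \<in> Y \<Longrightarrow> t \<le> T \<Longrightarrow> traj f y0 u t \<in> Y"
  by (induction t) (auto simp: memG)

lemma exists_control: "y \<in> Y \<Longrightarrow> \<exists>u. \<forall>t. (traj f y u t, u t) \<in> G"
proof -
  assume y: "y \<in> Y"
  define sel where "sel z = (SOME u. u \<in> adm Y U f z)" for z
  have sel: "z \<in> Y \<Longrightarrow> (z, sel z) \<in> G" for z
    using admne someI_ex[of "\<lambda>u. u \<in> adm Y U f z"] unfolding sel_def graphG_def by auto
  define z where "z = rec_nat y (\<lambda>_ w. f w (sel w))"
  have zY: "z t \<in> Y" for t
    by (induction t) (auto simp: z_def y sel[unfolded memG])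
  have tz: "traj f y (\<lambda>t. sel (z t)) t = z t" for t
    by (induction t) (auto simp: z_def)
  show ?thesis using sel zY tz by (intro exI[of _ "\<lambda>t. sel (z t)"]) auto
qed

lemma G_point: "\<exists>p. p \<in> G"
  using Yne exists_control by blast

lemma traj_shift: "traj f y0 u (s + t) = traj f (traj f y0 u s) (\<lambda>t. u (s + t)) t"
  by (induction t) auto

lemma traj_cons: "traj f y (case_nat a w) (Suc t) = traj f (f y a) w t"
  by (induction t) auto

end

context setting begin

lemma pseudo_mono: "pseudo N x v d \<Longrightarrow> d \<le> d' \<Longrightarrow> pseudo N x v d'"
  unfolding pseudo_def by force

lemma robust_point:
  assumes A0: "\<forall>z\<in>Y. \<forall>e>0. \<exists>N>0. \<forall>u. (\<forall>t<N. (traj f z u t, u t) \<in> G) \<longrightarrow>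
                 real N * (F z - e) \<le> (\<Sum>t<N. k (traj f z u t) (u t))"
    and e: "e > 0" and z: "z \<in> Y"
  shows "\<exists>N \<rho>. 0 < N \<and> \<rho> > 0 \<and> (\<forall>x v. dist (x 0) z < \<rho> \<and> pseudo N x v \<rho> \<longrightarrow>
                 real N * (F z - e) \<le> (\<Sum>t<N. k (x t) (v t)))"
proof -
  obtain N where N0: "0 < N" and N: "\<And>u. (\<forall>t<N. (traj f z u t, u t) \<in> G) \<Longrightarrow>
                 real N * (F z - e/2) \<le> (\<Sum>t<N. k (traj f z u t) (u t))"
    using A0 z e by (meson half_gt_zero)
  show ?thesis
  proof (rule ccontr)
    assume neg: "\<not> ?thesis"
    have H: "\<forall>\<rho>>0. \<exists>x v. dist (x 0) z < \<rho> \<and> pseudo N x v \<rho> \<and> (\<Sum>t<N. k (x t) (v t)) < real N * (F z - e)"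
    proof (intro allI impI)
      fix \<rho> :: real assume "\<rho> > 0"
      with neg N0 have "\<not> (\<forall>x v. dist (x 0) z < \<rho> \<and> pseudo N x v \<rho> \<longrightarrow>
                 real N * (F z - e) \<le> (\<Sum>t<N. k (x t) (v t)))" by blast
      then show "\<exists>x v. dist (x 0) z < \<rho> \<and> pseudo N x v \<rho> \<and> (\<Sum>t<N. k (x t) (v t)) < real N * (F z - e)"
        by (auto simp: not_le)
    qed
    then have "\<forall>j. \<exists>x v. dist (x 0) z < inverse (real (Suc j)) \<and> pseudo N x v (inverse (real (Suc j)))
              \<and> (\<Sum>t<N. k (x t) (v t)) < real N * (F z - e)"
      by (intro allI H[rule_format]) simp
    then have "\<exists>X. \<forall>j. \<exists>v. dist (X j 0) z < inverse (real (Suc j)) \<and> pseudo N (X j) v (inverse (real (Suc j)))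
              \<and> (\<Sum>t<N. k (X j t) (v t)) < real N * (F z - e)"
      by (rule choice)
    then obtain X where "\<forall>j. \<exists>v. dist (X j 0) z < inverse (real (Suc j)) \<and> pseudo N (X j) v (inverse (real (Suc j)))
              \<and> (\<Sum>t<N. k (X j t) (v t)) < real N * (F z - e)" ..
    then have "\<exists>V. \<forall>j. dist (X j 0) z < inverse (real (Suc j)) \<and> pseudo N (X j) (V j) (inverse (real (Suc j)))
              \<and> (\<Sum>t<N. k (X j t) (V j t)) < real N * (F z - e)"
      by (rule choice)
    then obtain V where XVall: "\<forall>j. dist (X j 0) z < inverse (real (Suc j)) \<and> pseudo N (X j) (V j) (inverse (real (Suc j)))
              \<and> (\<Sum>t<N. k (X j t) (V j t)) < real N * (F z - e)" ..
    have XV: "\<And>j. dist (X j 0) z < inverse (real (Suc j))" 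
      "\<And>j. pseudo N (X j) (V j) (inverse (real (Suc j)))"
      "\<And>j. (\<Sum>t<N. k (X j t) (V j t)) < real N * (F z - e)"
      using XVall by auto
    obtain p0 where p0: "p0 \<in> G" using G_point by blast
    define s where "s j t = (if t < N then (X j t, V j t) else p0)" for j t
    have sG: "s j t \<in> G" for j t using XV(2)[of j] p0 unfolding s_def pseudo_def by auto
    obtain r q where r: "strict_mono r" and q: "\<And>t. (\<lambda>j. s (r j) t) \<longlonglongrightarrow> q t" "\<And>t. q t \<in> G"
      using diag_compact[of G s, OF G_compact sG] by blast
    have qt: "(\<lambda>j. (X (r j) t, V (r j) t)) \<longlonglongrightarrow> q t" if "t < N" for t
      using q(1)[of t] that unfolding s_def by simp
    have XtG: "(X (r j) t, V (r j) t) \<in> G" if "t < N" for j t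
      using XV(2)[of "r j"] that unfolding pseudo_def by auto
    have q0: "fst (q 0) = z"
    proof -
      have "(\<lambda>j. X (r j) 0) \<longlonglongrightarrow> fst (q 0)" using tendsto_fst[OF qt[OF N0]] by (simp only: fst_conv)
      moreover have "(\<lambda>j. dist (X (r j) 0) z) \<longlonglongrightarrow> 0"
      proof (rule inv_sub_tendsto[OF r])
        fix j show "dist (X (r j) 0) z \<le> inverse (real (Suc (r j)))"
          using less_imp_le[OF XV(1)[of "r j"]] .
      qed simp
      then have "(\<lambda>j. X (r j) 0) \<longlonglongrightarrow> z" by (rule tendsto_dist_iff[THEN iffD2])
      ultimately show ?thesis using LIMSEQ_unique by blast
    qed
    have qS: "fst (q (Suc t)) = f (fst (q t)) (snd (q t))" if "Suc t < N" for t
    proof (rule lim_eq_dist0)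
      show "(\<lambda>j. X (r j) (Suc t)) \<longlonglongrightarrow> fst (q (Suc t))" using tendsto_fst[OF qt[OF that]] by (simp only: fst_conv)
      show "(\<lambda>j. f (X (r j) t) (V (r j) t)) \<longlonglongrightarrow> f (fst (q t)) (snd (q t))"
        using f_tendsto[OF qt q(2), of t] XtG that by simp
      show "(\<lambda>j. dist (X (r j) (Suc t)) (f (X (r j) t) (V (r j) t))) \<longlonglongrightarrow> 0"
      proof (rule inv_sub_tendsto[OF r])
        fix j show "dist (X (r j) (Suc t)) (f (X (r j) t) (V (r j) t)) \<le> inverse (real (Suc (r j)))"
          using XV(2)[of "r j"] that unfolding pseudo_def by blast
      qed simp
    qed
    have sumlim: "(\<lambda>j. \<Sum>t<N. k (X (r j) t) (V (r j) t)) \<longlonglongrightarrow> (\<Sum>t<N. k (fst (q t)) (snd (q t)))"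
      by (rule tendsto_sum) (use k_tendsto[OF qt q(2)] XtG in auto)
    have sumle: "(\<Sum>t<N. k (fst (q t)) (snd (q t))) \<le> real N * (F z - e)"
      by (rule LIMSEQ_le_const2[OF sumlim]) (use XV(3) in \<open>auto intro: less_imp_le\<close>)
    define v where "v t = snd (q t)" for t
    have tr: "t < N \<Longrightarrow> traj f z v t = fst (q t)" for t
    proof (induction t)
      case 0 then show ?case using q0 by simp
    next
      case (Suc t) then show ?case using qS[of t] by (simp add: v_def)
    qed
    have "\<forall>t<N. (traj f z v t, v t) \<in> G" using tr q(2) by (simp add: v_def)
    then have "real N * (F z - e/2) \<le> (\<Sum>t<N. k (traj f z v t) (v t))" by (rule N)
    also have "\<dots> = (\<Sum>t<N. k (fst (q t)) (snd (q t)))" using tr by (simp add: v_def)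
    finally have "real N * (F z - e/2) \<le> real N * (F z - e)" using sumle by linarith
    then show False using N0 e by (simp add: algebra_simps mult_le_0_iff)
  qed
qed

lemma robust:
  assumes Fc: "continuous_on Y F"
    and A0: "\<forall>z\<in>Y. \<forall>e>0. \<exists>N>0. \<forall>u. (\<forall>t<N. (traj f z u t, u t) \<in> G) \<longrightarrow>
                 real N * (F z - e) \<le> (\<Sum>t<N. k (traj f z u t) (u t))"
    and e: "e > 0"
  shows "\<exists>\<delta>>0. \<exists>Nmax. \<forall>z\<in>Y. \<exists>N. 0 < N \<and> N \<le> Nmax \<and>
           (\<forall>x v. x 0 = z \<and> pseudo N x v \<delta> \<longrightarrow> real N * (F z - 2*e) \<le> (\<Sum>t<N. k (x t) (v t)))"
proof -
  have P: "\<forall>z\<in>Y. \<exists>N \<rho>. 0 < N \<and> \<rho> > 0 \<and> (\<forall>x v. dist (x 0) z < \<rho> \<and> pseudo N x v \<rho> \<longrightarrow>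
                 real N * (F z - e) \<le> (\<Sum>t<N. k (x t) (v t)))"
    using robust_point[OF A0 e] by blast
  then have "\<exists>Nf. \<forall>z\<in>Y. \<exists>\<rho>. 0 < Nf z \<and> \<rho> > 0 \<and> (\<forall>x v. dist (x 0) z < \<rho> \<and> pseudo (Nf z) x v \<rho> \<longrightarrow>
                 real (Nf z) * (F z - e) \<le> (\<Sum>t<Nf z. k (x t) (v t)))"
    by (rule bchoice)
  then obtain Nf where "\<forall>z\<in>Y. \<exists>\<rho>. 0 < Nf z \<and> \<rho> > 0 \<and> (\<forall>x v. dist (x 0) z < \<rho> \<and> pseudo (Nf z) x v \<rho> \<longrightarrow>
                 real (Nf z) * (F z - e) \<le> (\<Sum>t<Nf z. k (x t) (v t)))" ..
  then have "\<exists>\<rho>f. \<forall>z\<in>Y. 0 < Nf z \<and> \<rho>f z > 0 \<and> (\<forall>x v. dist (x 0) z < \<rho>f z \<and> pseudo (Nf z) x v (\<rho>f z) \<longrightarrow>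
                 real (Nf z) * (F z - e) \<le> (\<Sum>t<Nf z. k (x t) (v t)))"
    by (rule bchoice)
  then obtain \<rho>f where NR: "\<forall>z\<in>Y. 0 < Nf z \<and> \<rho>f z > 0 \<and> (\<forall>x v. dist (x 0) z < \<rho>f z \<and> pseudo (Nf z) x v (\<rho>f z) \<longrightarrow>
                 real (Nf z) * (F z - e) \<le> (\<Sum>t<Nf z. k (x t) (v t)))" ..
  have "\<forall>z\<in>Y. \<exists>\<sigma>>0. \<forall>z'\<in>Y. dist z' z < \<sigma> \<longrightarrow> dist (F z') (F z) < e"
    using Fc e unfolding continuous_on_iff by blast
  then have "\<exists>\<sigma>f. \<forall>z\<in>Y. \<sigma>f z > 0 \<and> (\<forall>z'\<in>Y. dist z' z < \<sigma>f z \<longrightarrow> dist (F z') (F z) < e)"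
    by (rule bchoice)
  then obtain \<sigma>f where SF: "\<forall>z\<in>Y. \<sigma>f z > 0 \<and> (\<forall>z'\<in>Y. dist z' z < \<sigma>f z \<longrightarrow> dist (F z') (F z) < e)" ..
  define rf where "rf z = min (\<rho>f z) (\<sigma>f z)" for z
  have rpos: "z \<in> Y \<Longrightarrow> rf z > 0" for z using NR SF by (simp add: rf_def)
  obtain T where T: "T \<subseteq> Y" "finite T" "Y \<subseteq> \<Union> ((\<lambda>z. ball z (rf z)) ` T)"
  proof (rule compactE_image[OF cY, of Y "\<lambda>z. ball z (rf z)"])
    show "Y \<subseteq> \<Union> ((\<lambda>z. ball z (rf z)) ` Y)" using rpos by force
  qed auto
  have Tne: "T \<noteq> {}" using T Yne by auto
  define \<delta> where "\<delta> = Min (rf ` T)"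
  define Nmax where "Nmax = Max (Nf ` T)"
  have \<delta>pos: "\<delta> > 0" unfolding \<delta>_def using T Tne rpos by (subst Min_gr_iff) auto
  have \<delta>le: "z \<in> T \<Longrightarrow> \<delta> \<le> rf z" for z unfolding \<delta>_def using T by auto
  have Nle: "z \<in> T \<Longrightarrow> Nf z \<le> Nmax" for z unfolding Nmax_def using T by auto
  have "\<forall>z'\<in>Y. \<exists>N. 0 < N \<and> N \<le> Nmax \<and>
           (\<forall>x v. x 0 = z' \<and> pseudo N x v \<delta> \<longrightarrow> real N * (F z' - 2*e) \<le> (\<Sum>t<N. k (x t) (v t)))"
  proof
    fix z' assume z': "z' \<in> Y"
    then obtain z where z: "z \<in> T" "dist z z' < rf z" using T(3) by auto
    have zY: "z \<in> Y" using z T by auto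
    show "\<exists>N. 0 < N \<and> N \<le> Nmax \<and>
           (\<forall>x v. x 0 = z' \<and> pseudo N x v \<delta> \<longrightarrow> real N * (F z' - 2*e) \<le> (\<Sum>t<N. k (x t) (v t)))"
    proof (intro exI[of _ "Nf z"] conjI allI impI)
      show "0 < Nf z" using NR zY by auto
      show "Nf z \<le> Nmax" using Nle z by auto
      fix x v assume xv: "x 0 = z' \<and> pseudo (Nf z) x v \<delta>"
      have "pseudo (Nf z) x v (\<rho>f z)"
        using xv pseudo_mono \<delta>le[OF z(1)] unfolding rf_def by force
      moreover have "dist (x 0) z < \<rho>f z" using xv z(2) unfolding rf_def by (simp add: dist_commute)
      ultimately have "real (Nf z) * (F z - e) \<le> (\<Sum>t<Nf z. k (x t) (v t))" using NR zY by blast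
      moreover have "dist z' z < \<sigma>f z" using z(2) by (simp add: rf_def dist_commute)
      then have "dist (F z') (F z) < e" using SF zY z' by blast
      then have "F z' - 2*e \<le> F z - e" by (simp add: dist_real_def abs_less_iff)
      then have "real (Nf z) * (F z' - 2*e) \<le> real (Nf z) * (F z - e)" by (simp add: mult_left_mono)
      ultimately show "real (Nf z) * (F z' - 2*e) \<le> (\<Sum>t<Nf z. k (x t) (v t))" by linarith
    qed
  qed
  then show ?thesis using \<delta>pos by blast
qed

end

context setting begin

lemma core:
  assumes Fc: "continuous_on Y F" and FM: "\<And>y u. (y, u) \<in> G \<Longrightarrow> F y \<le> F (f y u)"
    and A0: "\<forall>z\<in>Y. \<forall>e>0. \<exists>N>0. \<forall>u. (\<forall>t<N. (traj f z u t, u t) \<in> G) \<longrightarrow>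
                 real N * (F z - e) \<le> (\<Sum>t<N. k (traj f z u t) (u t))"
    and y0: "y0 \<in> Y" and e0: "e0 > 0"
  shows "\<exists>\<psi> \<eta>. continuous_on Y \<psi> \<and> continuous_on Y \<eta> \<and>
     (\<forall>(y, u) \<in> G. k y u + \<psi> y0 - \<psi> y + \<eta> (f y u) - \<eta> y - (F y0 - e0) \<ge> 0 \<and> \<psi> (f y u) - \<psi> y \<ge> 0)"
proof -
  define e where "e = e0 / 3"
  have e: "e > 0" using e0 by (simp add: e_def)
  obtain \<delta> Nmax where \<delta>: "\<delta> > 0" and RB: "\<forall>z\<in>Y. \<exists>N. 0 < N \<and> N \<le> Nmax \<and>
           (\<forall>x v. x 0 = z \<and> pseudo N x v \<delta> \<longrightarrow> real N * (F z - 2*e) \<le> (\<Sum>t<N. k (x t) (v t)))"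
    using robust[OF Fc A0 e] by blast
  obtain K where K: "\<forall>p\<in>G. \<bar>k (fst p) (snd p)\<bar> \<le> K" using kbound by blast
  have K0: "K \<ge> 0" using K G_point by force
  have Kb: "(y, u) \<in> G \<Longrightarrow> - K \<le> k y u" for y u using K by force
  have "compact (F ` Y)" by (rule compact_continuous_image[OF Fc cY])
  then obtain BF where BF': "\<forall>x\<in>F ` Y. norm x \<le> BF" using compact_imp_bounded bounded_iff by metis
  have BF: "y \<in> Y \<Longrightarrow> \<bar>F y\<bar> \<le> BF" for y using BF' by auto
  have BF0: "BF \<ge> 0" using BF Yne by force
  define M where "M = 2 * BF * real Nmax / e"
  have M0: "M \<ge> 0" using BF0 e by (simp add: M_def)
  have Me: "M * e = 2 * BF * real Nmax" using e by (simp add: M_def)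
  define pen where "pen y = M * max (F y0 - F y) 0" for y
  have pen0: "pen y \<ge> 0" for y using M0 by (simp add: pen_def)
  define g where "g y u = k y u + pen y - F y0 + e0" for y u
  define Kg where "Kg = K + BF"
  have Kg0: "Kg \<ge> 0" using K0 BF0 by (simp add: Kg_def)
  have gb: "(y, u) \<in> G \<Longrightarrow> - Kg \<le> g y u" for y u
    using Kb[of y u] pen0[of y] BF[OF y0] e0 by (simp add: g_def Kg_def abs_le_iff)
  define C0 where "C0 = real Nmax * Kg"
  have C00: "C0 \<ge> 0" using Kg0 by (simp add: C0_def)
  define L where "L = C0 / \<delta>"
  have L0: "L \<ge> 0" using C00 \<delta> by (simp add: L_def)
  have L\<delta>: "L * \<delta> = C0" using \<delta> by (simp add: L_def)
  define S where "S n x v = (\<Sum>t<n. g (x t) (v t)) + L * (\<Sum>t<n-1. dist (x (Suc t)) (f (x t) (v t)))"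
    for n x v
  have Sge: "(\<Sum>t<n. g (x t) (v t)) \<le> S n x v" for n x v
    unfolding S_def using L0 by (simp add: sum_nonneg)
  have gsum: "(\<forall>t<n. (x t, v t) \<in> G) \<Longrightarrow> - (real n * Kg) \<le> (\<Sum>t<n. g (x t) (v t))" for n x v
  proof -
    assume "\<forall>t<n. (x t, v t) \<in> G"
    then have "(\<Sum>t<n. - Kg) \<le> (\<Sum>t<n. g (x t) (v t))" by (intro sum_mono) (simp add: gb)
    then show ?thesis by simp
  qed
  have split: "S n x v = S m x v + L * dist (x m) (f (x (m-1)) (v (m-1))) + S (n-m) (\<lambda>t. x (m+t)) (\<lambda>t. v (m+t))"
    if m0: "0 < m" and mn: "m < n" for m n x v
  proof -
    obtain m' where m: "m = Suc m'" using m0 by (cases m) auto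
    obtain j where n: "n = Suc m' + Suc j" using mn m by (metis add_Suc_right less_imp_Suc_add)
    define D where "D t = dist (x (Suc t)) (f (x t) (v t))" for t
    have e1: "(\<Sum>t<n. g (x t) (v t)) = (\<Sum>t<m. g (x t) (v t)) + (\<Sum>t<Suc j. g (x (m+t)) (v (m+t)))"
      unfolding n m by (rule sum_add_split)
    have "(\<Sum>t<n-1. D t) = (\<Sum>t<m'. D t) + (\<Sum>t<Suc j. D (m'+t))"
      unfolding n by (simp add: sum_add_split)
    also have "\<dots> = (\<Sum>t<m'. D t) + D m' + (\<Sum>t<j. D (m' + Suc t))"
      by (subst sum.lessThan_Suc_shift) simp
    finally have e2: "(\<Sum>t<n-1. D t) = (\<Sum>t<m'. D t) + D m' + (\<Sum>t<j. D (m' + Suc t))" .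
    have e3: "D (m' + Suc t) = dist (x (m + Suc t)) (f (x (m+t)) (v (m+t)))" for t
      unfolding D_def m by simp
    have "S n x v = (\<Sum>t<m. g (x t) (v t)) + (\<Sum>t<Suc j. g (x (m+t)) (v (m+t)))
                    + L * ((\<Sum>t<m'. D t) + D m' + (\<Sum>t<j. D (m' + Suc t)))"
      unfolding S_def e1 using e2 by (simp add: D_def)
    also have "\<dots> = S m x v + L * D m' + S (n-m) (\<lambda>t. x (m+t)) (\<lambda>t. v (m+t))"
      unfolding S_def using e3 by (simp add: m n D_def algebra_simps)
    finally show ?thesis by (simp add: D_def m)
  qed
  have block: "0 \<le> (\<Sum>t<N. g (x t) (v t))"
    if z: "x 0 \<in> Y" and N: "0 < N" "N \<le> Nmax" and ps: "pseudo N x v \<delta>"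
      and kN: "real N * (F (x 0) - 2*e) \<le> (\<Sum>t<N. k (x t) (v t))" for N x v
  proof -
    have "(\<Sum>t<N. g (x t) (v t)) = (\<Sum>t<N. k (x t) (v t)) + (\<Sum>t<N. pen (x t)) - real N * F y0 + real N * e0"
      by (simp add: g_def sum.distrib sum_subtractf)
    moreover have "pen (x 0) \<le> (\<Sum>t<N. pen (x t))"
    proof -
      obtain N' where "N = Suc N'" using N by (cases N) auto
      then show ?thesis by (simp only: sum.lessThan_Suc_shift) (simp add: sum_nonneg pen0)
    qed
    moreover have "real N * (F (x 0) - 2*e) - real N * F y0 + real N * e0 + pen (x 0) \<ge> 0"
    proof (cases "F (x 0) \<ge> F y0 - e")
      case True
      have "real N * (F (x 0) - 2*e) - real N * F y0 + real N * e0 = real N * (F (x 0) - F y0 + e)"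
        by (simp add: e_def algebra_simps)
      also have "\<dots> \<ge> 0" using True by simp
      finally show ?thesis using pen0[of "x 0"] by linarith
    next
      case False
      then have "pen (x 0) \<ge> M * e" unfolding pen_def using M0 by (simp add: mult_left_mono)
      then have p: "pen (x 0) \<ge> 2 * BF * real Nmax" using Me by simp
      have "real N * (F (x 0) - 2*e) - real N * F y0 + real N * e0 = real N * (F (x 0) - F y0 + e)"
        by (simp add: e_def algebra_simps)
      also have "\<dots> \<ge> real N * (- 2 * BF)"
        using BF[OF z] BF[OF y0] e by (intro mult_left_mono) (auto simp: abs_le_iff)
      also have "real N * (- 2 * BF) \<ge> - (2 * BF * real Nmax)"
        using N BF0 mult_right_mono[of "real N" "real Nmax" BF] by (simp add: mult.commute)
      finally show ?thesis using p by linarith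
    qed
    ultimately show ?thesis using kN by linarith
  qed
  have lower: "\<forall>x v. (\<forall>t<n. (x t, v t) \<in> G) \<longrightarrow> - C0 \<le> S n x v" for n
  proof (induction n rule: less_induct)
    case (less n)
    show ?case
    proof (intro allI impI)
      fix x v assume xG: "\<forall>t<n. (x t, v t) \<in> G"
      show "- C0 \<le> S n x v"
      proof (cases "n = 0")
        case True then show ?thesis using C00 by (simp add: S_def)
      next
        case False
        then have z: "x 0 \<in> Y" using xG memG by (metis prod.collapse neq0_conv)
        obtain N where N: "0 < N" "N \<le> Nmax"
          and NB: "\<forall>x' v'. x' 0 = x 0 \<and> pseudo N x' v' \<delta> \<longrightarrow> real N * (F (x 0) - 2*e) \<le> (\<Sum>t<N. k (x' t) (v' t))"
          using RB z by blast
        show ?thesis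
        proof (cases "n < N")
          case True
          have "- C0 \<le> - (real n * Kg)" unfolding C0_def using True N Kg0 by (simp add: mult_right_mono)
          also have "\<dots> \<le> S n x v" using gsum[OF xG] Sge[where n=n and x=x and v=v] by linarith
          finally show ?thesis .
        next
          case False
          then have Nn: "N \<le> n" by simp
          show ?thesis
          proof (cases "\<exists>j. Suc j < N \<and> \<delta> < dist (x (Suc j)) (f (x j) (v j))")
            case True
            then obtain j where j: "Suc j < N" "\<delta> < dist (x (Suc j)) (f (x j) (v j))" by blast
            have sp: "S n x v = S (Suc j) x v + L * dist (x (Suc j)) (f (x j) (v j))
                     + S (n - Suc j) (\<lambda>t. x (Suc j + t)) (\<lambda>t. v (Suc j + t))"
              using split[where m="Suc j" and n=n and x=x and v=v] j Nn by simp
            have a1: "- C0 \<le> S (Suc j) x v"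
            proof -
              have "- C0 \<le> - (real (Suc j) * Kg)" unfolding C0_def
                using j N Kg0 by (intro le_imp_neg_le mult_right_mono) simp_all
              also have "\<dots> \<le> S (Suc j) x v" using gsum[where n="Suc j" and x=x and v=v] xG j Nn Sge[where n="Suc j" and x=x and v=v] by simp
              finally show ?thesis .
            qed
            have a2: "C0 \<le> L * dist (x (Suc j)) (f (x j) (v j))"
              using L\<delta> j(2) L0 by (metis less_imp_le mult_left_mono)
            have a3: "- C0 \<le> S (n - Suc j) (\<lambda>t. x (Suc j + t)) (\<lambda>t. v (Suc j + t))"
              using less.IH[of "n - Suc j"] xG j Nn by simp
            show ?thesis using sp a1 a2 a3 by linarith
          next
            case False
            then have ps: "pseudo N x v \<delta>" using xG Nn unfolding pseudo_def by (auto simp: not_less dest: leD)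
            then have b0: "0 \<le> S N x v" using block[OF z N ps] NB Sge[where n=N and x=x and v=v] by auto
            show ?thesis
            proof (cases "N = n")
              case True then show ?thesis using b0 C00 by simp
            next
              case False
              then have Nlt: "N < n" using Nn by simp
              have sp: "S n x v = S N x v + L * dist (x N) (f (x (N-1)) (v (N-1)))
                     + S (n - N) (\<lambda>t. x (N + t)) (\<lambda>t. v (N + t))"
                using split[where m=N and n=n and x=x and v=v] N Nlt by simp
              have "- C0 \<le> S (n - N) (\<lambda>t. x (N + t)) (\<lambda>t. v (N + t))"
                using less.IH[of "n - N"] xG N Nlt by simp
              moreover have "0 \<le> L * dist (x N) (f (x (N-1)) (v (N-1)))" using L0 by simp
              ultimately show ?thesis using sp b0 by linarith
            qed
          qed
        qed
      qed
    qed
  qed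
  define CH where "CH = {c :: nat \<times> (nat \<Rightarrow> 'a) \<times> (nat \<Rightarrow> 'u). \<forall>t<fst c. (fst (snd c) t, snd (snd c) t) \<in> G}"
  define cost where "cost y c = L * dist y (fst (snd c) 0) + S (fst c) (fst (snd c)) (snd (snd c))" for y c
  define \<eta> where "\<eta> y = (INF c\<in>CH. cost y c)" for y
  have costlb: "c \<in> CH \<Longrightarrow> - C0 \<le> cost y c" for y c
    using lower[of "fst c"] L0 unfolding CH_def cost_def by (simp add: add_increasing)
  have CHne: "CH \<noteq> {}" unfolding CH_def by auto
  have bdd: "bdd_below (cost y ` CH)" for y using costlb by (intro bdd_belowI2) auto
  have \<eta>le: "c \<in> CH \<Longrightarrow> \<eta> y \<le> cost y c" for y c unfolding \<eta>_def by (rule cINF_lower[OF bdd])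
  have lip1: "\<eta> y \<le> \<eta> y' + L * dist y y'" for y y'
  proof -
    have "\<eta> y - L * dist y y' \<le> \<eta> y'"
      unfolding \<eta>_def[of y']
    proof (rule cINF_greatest[OF CHne])
      fix c assume c: "c \<in> CH"
      have "dist y (fst (snd c) 0) \<le> dist y y' + dist y' (fst (snd c) 0)" by (rule dist_triangle)
      then have "L * dist y (fst (snd c) 0) \<le> L * (dist y y' + dist y' (fst (snd c) 0))"
        using L0 by (rule mult_left_mono)
      then have "cost y c \<le> cost y' c + L * dist y y'"
        unfolding cost_def by (simp add: algebra_simps)
      then show "\<eta> y - L * dist y y' \<le> cost y' c" using \<eta>le[OF c, of y] by linarith
    qed
    then show ?thesis by linarith
  qed
  have \<eta>cont: "continuous_on Y \<eta>"
  proof (rule lipschitz_on_continuous_on)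
    show "L-lipschitz_on Y \<eta>" unfolding lipschitz_on_def
    proof (intro conjI L0 ballI)
      fix a b assume "a \<in> Y" "b \<in> Y"
      have "\<eta> a \<le> \<eta> b + L * dist a b" by (rule lip1)
      moreover have "\<eta> b \<le> \<eta> a + L * dist a b" using lip1[of b a] by (simp add: dist_commute)
      ultimately show "dist (\<eta> a) (\<eta> b) \<le> L * dist a b" by (simp add: dist_real_def abs_le_iff)
    qed
  qed
  have sub: "\<eta> y \<le> g y u + \<eta> (f y u)" if yu: "(y, u) \<in> G" for y u
  proof -
    have "\<eta> y - g y u \<le> \<eta> (f y u)"
      unfolding \<eta>_def[of "f y u"]
    proof (rule cINF_greatest[OF CHne])
      fix c assume c: "c \<in> CH"
      obtain n x v where cdef: "c = (n, x, v)" by (cases c) auto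
      have xG: "\<forall>t<n. (x t, v t) \<in> G" using c cdef unfolding CH_def by simp
      define c' where "c' = (Suc n, case_nat y x, case_nat u v)"
      have c': "c' \<in> CH" unfolding CH_def c'_def using xG yu by (auto simp: less_Suc_eq_0_disj)
      have "S (Suc n) (case_nat y x) (case_nat u v) \<le> g y u + L * dist (f y u) (x 0) + S n x v"
      proof (cases "n = 0")
        case True then show ?thesis using L0 by (simp add: S_def)
      next
        case False
        have "S (Suc n) (case_nat y x) (case_nat u v) = S 1 (case_nat y x) (case_nat u v)
               + L * dist (x 0) (f y u) + S n (\<lambda>t. case_nat y x (1 + t)) (\<lambda>t. case_nat u v (1 + t))"
          using split[where m=1 and n="Suc n" and x="case_nat y x" and v="case_nat u v"] False by simp
        also have "\<dots> = g y u + L * dist (f y u) (x 0) + S n x v"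
          by (simp add: S_def dist_commute)
        finally show ?thesis by simp
      qed
      then have "cost y c' \<le> g y u + cost (f y u) c"
        unfolding cost_def c'_def cdef by simp
      then show "\<eta> y - g y u \<le> cost (f y u) c" using \<eta>le[OF c', of y] by linarith
    qed
    then show ?thesis by linarith
  qed
  define \<psi> where "\<psi> y = - pen y" for y
  have \<psi>cont: "continuous_on Y \<psi>"
    unfolding \<psi>_def pen_def by (intro continuous_intros Fc)
  have all: "\<forall>(y, u) \<in> G. k y u + \<psi> y0 - \<psi> y + \<eta> (f y u) - \<eta> y - (F y0 - e0) \<ge> 0 \<and> \<psi> (f y u) - \<psi> y \<ge> 0"
  proof -
    { fix y u assume pG: "(y, u) \<in> G"
      have "k y u + \<psi> y0 - \<psi> y + \<eta> (f y u) - \<eta> y - (F y0 - e0) = g y u + \<eta> (f y u) - \<eta> y"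
        by (simp add: \<psi>_def pen_def g_def)
      moreover have "g y u + \<eta> (f y u) - \<eta> y \<ge> 0" using sub[OF pG] by simp
      moreover have "\<psi> (f y u) - \<psi> y \<ge> 0"
        using FM[OF pG] M0 by (simp add: \<psi>_def pen_def mult_left_mono)
      ultimately have "k y u + \<psi> y0 - \<psi> y + \<eta> (f y u) - \<eta> y - (F y0 - e0) \<ge> 0 \<and> \<psi> (f y u) - \<psi> y \<ge> 0"
        by simp }
    then show ?thesis by blast
  qed
  show ?thesis using \<psi>cont \<eta>cont all by blast
qed

end

context setting begin

lemma cont_bound: "continuous_on Y (\<eta> :: 'a \<Rightarrow> real) \<Longrightarrow> \<exists>B. \<forall>y\<in>Y. \<bar>\<eta> y\<bar> \<le> B"
proof -
  assume c: "continuous_on Y \<eta>"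
  have "compact (\<eta> ` Y)" by (rule compact_continuous_image[OF c cY])
  then obtain B where "\<forall>x\<in>\<eta> ` Y. norm x \<le> B" using compact_imp_bounded bounded_iff by metis
  then show ?thesis by (intro exI[of _ B]) simp
qed

definition feasible :: "'a \<Rightarrow> real \<Rightarrow> ('a \<Rightarrow> real) \<Rightarrow> ('a \<Rightarrow> real) \<Rightarrow> bool" where
  "feasible y0 \<mu> \<psi> \<eta> \<longleftrightarrow> continuous_on Y \<psi> \<and> continuous_on Y \<eta> \<and>
      (\<forall>(y, u) \<in> G. k y u + \<psi> y0 - \<psi> y + \<eta> (f y u) - \<eta> y - \<mu> \<ge> 0 \<and> \<psi> (f y u) - \<psi> y \<ge> 0)"

lemma dstar_eq:
  assumes Fc: "continuous_on Y F" and FM: "\<And>y u. (y, u) \<in> G \<Longrightarrow> F y \<le> F (f y u)"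
    and A0: "\<forall>z\<in>Y. \<forall>e>0. \<exists>N>0. \<forall>u. (\<forall>t<N. (traj f z u t, u t) \<in> G) \<longrightarrow>
                 real N * (F z - e) \<le> (\<Sum>t<N. k (traj f z u t) (u t))"
    and y0: "y0 \<in> Y"
    and UB: "\<And>\<mu> \<psi> \<eta>. feasible y0 \<mu> \<psi> \<eta> \<Longrightarrow> \<mu> \<le> F y0"
  shows "F y0 = dstar Y U f k y0"
proof -
  define D where "D = {\<mu>. \<exists>\<psi> \<eta>. continuous_on Y \<psi> \<and> continuous_on Y \<eta> \<and>
      (\<forall>(y, u) \<in> G. k y u + \<psi> y0 - \<psi> y + \<eta> (f y u) - \<eta> y - \<mu> \<ge> 0 \<and> \<psi> (f y u) - \<psi> y \<ge> 0)}"
  have ds: "dstar Y U f k y0 = Sup D" unfolding dstar_def D_def by simp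
  have inD: "F y0 - e0 \<in> D" if "e0 > 0" for e0
    using core[OF Fc FM A0 y0 that] unfolding D_def by blast
  have Dne: "D \<noteq> {}" using inD[of 1] by auto
  have Dub: "\<mu> \<in> D \<Longrightarrow> \<mu> \<le> F y0" for \<mu> using UB unfolding D_def feasible_def by blast
  have bdd: "bdd_above D" using Dub by (intro bdd_aboveI) auto
  have le: "Sup D \<le> F y0" using Dub Dne by (intro cSup_least) auto
  have ge: "F y0 - e0 \<le> Sup D" if "e0 > 0" for e0 using cSup_upper[OF inD[OF that] bdd] .
  have "F y0 \<le> Sup D"
  proof (rule ccontr)
    assume ne: "\<not> F y0 \<le> Sup D"
    then have "(F y0 - Sup D) / 2 > 0" by simp
    from ge[OF this] have "F y0 \<le> Sup D" by (simp add: field_simps)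
    then show False using ne by simp
  qed
  with le ds show ?thesis by simp
qed

lemma feasible_traj:
  assumes fe: "feasible y0 \<mu> \<psi> \<eta>" and y0: "y0 \<in> Y"
    and uG: "\<forall>t<T. (traj f y0 u t, u t) \<in> G"
  shows "\<forall>t<T. \<mu> + \<eta> (traj f y0 u t) - \<eta> (traj f y0 u (Suc t)) \<le> k (traj f y0 u t) (u t)"
proof -
  let ?x = "traj f y0 u"
  have C: "\<forall>(y, u) \<in> G. k y u + \<psi> y0 - \<psi> y + \<eta> (f y u) - \<eta> y - \<mu> \<ge> 0 \<and> \<psi> (f y u) - \<psi> y \<ge> 0"
    using fe unfolding feasible_def by blast
  have psi: "t \<le> T \<Longrightarrow> \<psi> y0 \<le> \<psi> (?x t)" for t
  proof (induction t)
    case 0 then show ?case by simp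
  next
    case (Suc t)
    then have "(?x t, u t) \<in> G" using uG by simp
    then have "\<psi> (?x t) \<le> \<psi> (?x (Suc t))" using C by auto
    then show ?case using Suc by simp
  qed
  show ?thesis
  proof (intro allI impI)
    fix t assume t: "t < T"
    then have "(?x t, u t) \<in> G" using uG by simp
    then have "k (?x t) (u t) + \<psi> y0 - \<psi> (?x t) + \<eta> (?x (Suc t)) - \<eta> (?x t) - \<mu> \<ge> 0" using C by auto
    moreover have "\<psi> y0 \<le> \<psi> (?x t)" using psi t by simp
    ultimately show "\<mu> + \<eta> (?x t) - \<eta> (?x (Suc t)) \<le> k (?x t) (u t)" by simp
  qed
qed

lemma UT_ne: "y \<in> Y \<Longrightarrow> UT Y U f T y \<noteq> {}"
  using exists_control UT_iff by blast

lemma UT_bdd: "y \<in> Y \<Longrightarrow> bdd_below ((\<lambda>u. \<Sum>t<T. k (traj f y u t) (u t)) ` UT Y U f T y)"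
proof -
  assume y: "y \<in> Y"
  obtain K where K: "\<forall>p\<in>G. \<bar>k (fst p) (snd p)\<bar> \<le> K" using kbound by blast
  show ?thesis
  proof (rule bdd_belowI2)
    fix u assume "u \<in> UT Y U f T y"
    then have uG: "\<forall>t<T. (traj f y u t, u t) \<in> G" using UT_iff[OF y] by simp
    have "(\<Sum>t<T. - K) \<le> (\<Sum>t<T. k (traj f y u t) (u t))"
      using uG K by (intro sum_mono) force
    then show "- (real T * K) \<le> (\<Sum>t<T. k (traj f y u t) (u t))" by simp
  qed
qed

lemma W_eq: "y \<in> Y \<Longrightarrow> (INF u\<in>UT Y U f T y. \<Sum>t<T. k (traj f y u t) (u t)) = real T * VT Y U f k T y"
  unfolding VT_def using UT_ne[of y T] by (cases "T = 0") auto

lemma partA: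
  assumes lim: "\<forall>y0\<in>Y. (\<lambda>T. VT Y U f k T y0) \<longlonglongrightarrow> V y0" and Vc: "continuous_on Y V"
    and y0: "y0 \<in> Y"
  shows "V y0 = dstar Y U f k y0"
proof (rule dstar_eq[OF Vc _ _ y0])
  fix y u assume yu: "(y, u) \<in> G"
  then have y: "y \<in> Y" and fy: "f y u \<in> Y" by (auto simp: memG)
  have step: "VT Y U f k (Suc n) y \<le> k y u / real (Suc n) + (real n / real (Suc n)) * VT Y U f k n (f y u)" for n
  proof -
    let ?Iy = "INF c\<in>UT Y U f (Suc n) y. \<Sum>t<Suc n. k (traj f y c t) (c t)"
    let ?If = "INF w\<in>UT Y U f n (f y u). \<Sum>t<n. k (traj f (f y u) w t) (w t)"
    have "?Iy - k y u \<le> ?If"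
    proof (rule cINF_greatest[OF UT_ne[OF fy]])
      fix w assume w: "w \<in> UT Y U f n (f y u)"
      then have wG: "\<forall>t<n. (traj f (f y u) w t, w t) \<in> G" using UT_iff[OF fy] by simp
      have cG: "\<forall>t<Suc n. (traj f y (case_nat u w) t, case_nat u w t) \<in> G"
      proof (intro allI impI)
        fix t assume "t < Suc n"
        then show "(traj f y (case_nat u w) t, case_nat u w t) \<in> G"
          using yu wG by (cases t) (auto simp: traj_cons simp del: traj.simps(2))
      qed
      then have c: "case_nat u w \<in> UT Y U f (Suc n) y" using UT_iff[OF y] by simp
      have "?Iy \<le> (\<Sum>t<Suc n. k (traj f y (case_nat u w) t) (case_nat u w t))"
        by (rule cINF_lower[OF UT_bdd[OF y] c])
      also have "\<dots> = k y u + (\<Sum>t<n. k (traj f (f y u) w t) (w t))"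
        by (simp only: sum.lessThan_Suc_shift traj_cons) simp
      finally show "?Iy - k y u \<le> (\<Sum>t<n. k (traj f (f y u) w t) (w t))" by simp
    qed
    then have "real (Suc n) * VT Y U f k (Suc n) y \<le> k y u + real n * VT Y U f k n (f y u)"
      using W_eq[OF y, of "Suc n"] W_eq[OF fy, of n] by simp
    then have "VT Y U f k (Suc n) y \<le> (k y u + real n * VT Y U f k n (f y u)) / real (Suc n)"
      by (subst pos_le_divide_eq) (auto simp: mult.commute)
    then show ?thesis by (simp add: add_divide_distrib)
  qed
  have l1: "(\<lambda>n. VT Y U f k (Suc n) y) \<longlonglongrightarrow> V y" using LIMSEQ_Suc lim y by blast
  have l2: "(\<lambda>n. k y u / real (Suc n) + (real n / real (Suc n)) * VT Y U f k n (f y u)) \<longlonglongrightarrow> 0 + 1 * V (f y u)"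
  proof (intro tendsto_intros)
    show "(\<lambda>n. k y u / real (Suc n)) \<longlonglongrightarrow> 0"
      using LIMSEQ_Suc[OF lim_const_over_n[of "k y u"]] by simp
    show "(\<lambda>n. real n / real (Suc n)) \<longlonglongrightarrow> 1" using LIMSEQ_n_over_Suc_n by simp
    show "(\<lambda>n. VT Y U f k n (f y u)) \<longlonglongrightarrow> V (f y u)" using lim fy by blast
  qed
  show "V y \<le> V (f y u)" using LIMSEQ_le[OF l1 l2] step by auto
next
  show "\<forall>z\<in>Y. \<forall>e>0. \<exists>N>0. \<forall>u. (\<forall>t<N. (traj f z u t, u t) \<in> G) \<longrightarrow>
                 real N * (V z - e) \<le> (\<Sum>t<N. k (traj f z u t) (u t))"
  proof (intro ballI allI impI)
    fix z e assume z: "z \<in> Y" and e: "(e::real) > 0"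
    have "\<forall>\<^sub>F n in sequentially. dist (VT Y U f k n z) (V z) < e" using tendstoD lim z e by blast
    then obtain N0 where N0: "\<forall>n\<ge>N0. dist (VT Y U f k n z) (V z) < e" unfolding eventually_sequentially by blast
    have vn: "V z - e \<le> VT Y U f k (Suc N0) z" using N0[rule_format, of "Suc N0"] by (simp add: dist_real_def abs_less_iff)
    show "\<exists>N>0. \<forall>u. (\<forall>t<N. (traj f z u t, u t) \<in> G) \<longrightarrow>
                 real N * (V z - e) \<le> (\<Sum>t<N. k (traj f z u t) (u t))"
    proof (intro exI[of _ "Suc N0"] conjI allI impI)
      fix u assume "\<forall>t<Suc N0. (traj f z u t, u t) \<in> G"
      then have u: "u \<in> UT Y U f (Suc N0) z" using UT_iff[OF z] by simp
      have "real (Suc N0) * (V z - e) \<le> real (Suc N0) * VT Y U f k (Suc N0) z"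
        using vn by (intro mult_left_mono) auto
      also have "\<dots> \<le> (\<Sum>t<Suc N0. k (traj f z u t) (u t))"
        using W_eq[OF z, of "Suc N0"] cINF_lower[OF UT_bdd[OF z] u] by simp
      finally show "real (Suc N0) * (V z - e) \<le> (\<Sum>t<Suc N0. k (traj f z u t) (u t))" .
    qed simp
  qed
next
  fix \<mu> \<psi> \<eta> assume fe: "feasible y0 \<mu> \<psi> \<eta>"
  obtain B where B: "\<forall>y\<in>Y. \<bar>\<eta> y\<bar> \<le> B" using cont_bound fe unfolding feasible_def by blast
  have bnd: "\<mu> - 2 * B / real (Suc n) \<le> VT Y U f k (Suc n) y0" for n
  proof -
    let ?T = "Suc n"
    have "real ?T * \<mu> - 2 * B \<le> (INF u\<in>UT Y U f ?T y0. \<Sum>t<?T. k (traj f y0 u t) (u t))"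
    proof (rule cINF_greatest[OF UT_ne[OF y0]])
      fix u assume "u \<in> UT Y U f ?T y0"
      then have uG: "\<forall>t<?T. (traj f y0 u t, u t) \<in> G" using UT_iff[OF y0] by simp
      have "(\<Sum>t<?T. \<mu> + \<eta> (traj f y0 u t) - \<eta> (traj f y0 u (Suc t))) \<le> (\<Sum>t<?T. k (traj f y0 u t) (u t))"
        using feasible_traj[OF fe y0 uG] by (intro sum_mono) simp
      moreover have "(\<Sum>t<?T. \<mu> + \<eta> (traj f y0 u t) - \<eta> (traj f y0 u (Suc t)))
          = real ?T * \<mu> + (\<eta> (traj f y0 u 0) - \<eta> (traj f y0 u ?T))"
      proof -
        have tel: "(\<Sum>t<?T. \<eta> (traj f y0 u t) - \<eta> (traj f y0 u (Suc t))) = \<eta> (traj f y0 u 0) - \<eta> (traj f y0 u ?T)"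
          by (rule sum_lessThan_telescope'[of "\<lambda>t. \<eta> (traj f y0 u t)"])
        have "(\<Sum>t<?T. \<mu> + \<eta> (traj f y0 u t) - \<eta> (traj f y0 u (Suc t)))
            = (\<Sum>t<?T. \<mu>) + (\<Sum>t<?T. \<eta> (traj f y0 u t) - \<eta> (traj f y0 u (Suc t)))"
          by (simp only: add_diff_eq[symmetric] sum.distrib)
        then show ?thesis by (simp only: tel) simp
      qed
      moreover have "\<bar>\<eta> (traj f y0 u 0)\<bar> \<le> B" "\<bar>\<eta> (traj f y0 u ?T)\<bar> \<le> B"
        using B trajG_Y[OF uG y0, of 0] trajG_Y[OF uG y0, of ?T] by (simp_all del: traj.simps)
      ultimately show "real ?T * \<mu> - 2 * B \<le> (\<Sum>t<?T. k (traj f y0 u t) (u t))" by (simp add: abs_le_iff)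
    qed
    then have "real ?T * \<mu> - 2 * B \<le> real ?T * VT Y U f k ?T y0" using W_eq[OF y0, of ?T] by simp
    then have "(real ?T * \<mu> - 2 * B) / real ?T \<le> VT Y U f k ?T y0"
      by (subst pos_divide_le_eq) (auto simp: mult.commute)
    then show ?thesis by (simp add: diff_divide_distrib)
  qed
  have l1: "(\<lambda>n. \<mu> - 2 * B / real (Suc n)) \<longlonglongrightarrow> \<mu> - 0"
    by (intro tendsto_intros) (use LIMSEQ_Suc[OF lim_const_over_n[of "2*B"]] in simp)
  have l2: "(\<lambda>n. VT Y U f k (Suc n) y0) \<longlonglongrightarrow> V y0" using LIMSEQ_Suc lim y0 by blast
  show "\<mu> \<le> V y0" using LIMSEQ_le[OF l1 l2] bnd by auto
qed

end


lemma disc_summable: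
  fixes a :: "nat \<Rightarrow> real"
  assumes B: "\<And>t. \<bar>a t\<bar> \<le> B" and a0: "0 \<le> \<alpha>" and a1: "\<alpha> < 1"
  shows "summable (\<lambda>t. \<alpha>^t * a t)"
proof (rule summable_comparison_test)
  show "\<exists>N. \<forall>n\<ge>N. norm (\<alpha>^n * a n) \<le> B * \<alpha>^n"
  proof (intro exI[of _ 0] allI impI)
    fix n :: nat
    have "\<bar>a n\<bar> * \<alpha>^n \<le> B * \<alpha>^n" by (rule mult_right_mono) (simp_all add: B a0)
    then show "norm (\<alpha>^n * a n) \<le> B * \<alpha>^n" using a0 by (simp add: abs_mult mult.commute)
  qed
  show "summable (\<lambda>n. B * \<alpha>^n)" using a0 a1 by (intro summable_mult summable_geometric) simp
qed

lemma disc_bound: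
  fixes a :: "nat \<Rightarrow> real"
  assumes B: "\<And>t. \<bar>a t\<bar> \<le> B" and a0: "0 \<le> \<alpha>" and a1: "\<alpha> < 1"
  shows "\<bar>\<Sum>t. \<alpha>^t * a t\<bar> \<le> B / (1 - \<alpha>)"
proof -
  have sg: "summable (\<lambda>n. B * \<alpha>^n)" using a0 a1 by (intro summable_mult summable_geometric) simp
  have sgB: "(\<Sum>n. B * \<alpha>^n) = B / (1 - \<alpha>)" using a0 a1 by (simp add: suminf_mult suminf_geometric)
  have sa: "summable (\<lambda>t. \<alpha>^t * a t)" by (rule disc_summable[OF B a0 a1])
  have "(\<Sum>t. \<alpha>^t * a t) \<le> (\<Sum>n. B * \<alpha>^n)"
  proof (intro suminf_le sa sg)
    fix n have "a n \<le> B" using B[of n] by (simp add: abs_le_iff)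
    then show "\<alpha>^n * a n \<le> B * \<alpha>^n" using mult_right_mono[of "a n" B "\<alpha>^n"] a0 by (simp add: mult.commute)
  qed
  moreover have "(\<Sum>n. - (B * \<alpha>^n)) \<le> (\<Sum>t. \<alpha>^t * a t)"
  proof (intro suminf_le sa summable_minus sg)
    fix n have "- B \<le> a n" using B[of n] by (simp add: abs_le_iff)
    then show "- (B * \<alpha>^n) \<le> \<alpha>^n * a n" using mult_right_mono[of "- B" "a n" "\<alpha>^n"] a0 by (simp add: mult.commute)
  qed
  ultimately show ?thesis using sgB suminf_minus[OF sg] by (simp add: abs_le_iff)
qed

lemma abel_ident:
  fixes a :: "nat \<Rightarrow> real"
  shows "(\<Sum>t<n. \<alpha>^t * a t) = \<alpha>^n * (\<Sum>t<n. a t) + (\<Sum>t<n. (\<alpha>^t - \<alpha>^(Suc t)) * (\<Sum>i<Suc t. a i))"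
  by (induction n) (simp_all add: algebra_simps)

lemma abel:
  fixes a :: "nat \<Rightarrow> real"
  assumes a0: "0 \<le> \<alpha>" and a1: "\<alpha> \<le> 1" and P: "\<And>m. (\<Sum>t<m. a t) \<le> 0"
  shows "(\<Sum>t<n. \<alpha>^t * a t) \<le> 0"
proof -
  have "\<alpha>^n * (\<Sum>t<n. a t) \<le> 0" using a0 P by (simp add: mult_nonneg_nonpos)
  moreover have "(\<Sum>t<n. (\<alpha>^t - \<alpha>^(Suc t)) * (\<Sum>i<Suc t. a i)) \<le> 0"
  proof (rule sum_nonpos)
    fix t
    have "\<alpha>^(Suc t) \<le> \<alpha>^t" using power_decreasing[of t "Suc t" \<alpha>] a0 a1 by simp
    moreover have "(\<Sum>i<Suc t. a i) \<le> 0" by (rule P)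
    ultimately show "(\<alpha>^t - \<alpha>^(Suc t)) * (\<Sum>i<Suc t. a i) \<le> 0" by (intro mult_nonneg_nonpos) simp_all
  qed
  ultimately show ?thesis by (simp add: abel_ident)
qed

lemma argmax:
  fixes a :: "nat \<Rightarrow> real"
  assumes N: "0 < N" and ab: "\<forall>t<N. \<bar>a t\<bar> \<le> K2" and neg: "(\<Sum>t<N. a t) \<le> - (real N * c)" and c: "c > 0"
  shows "\<exists>s<N. real N * c \<le> real (N - s) * K2 \<and> (\<forall>m. s + m \<le> N \<longrightarrow> (\<Sum>t<m. a (s+t)) \<le> 0)"
proof -
  define P where "P m = (\<Sum>t<m. a t)" for m
  define A where "A = P ` {..N}"
  have "Max A \<in> A" unfolding A_def by (intro Max_in) auto
  then obtain s where s0: "Max A = P s" "s \<in> {..N}" unfolding A_def by (rule imageE)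
  then have s: "s \<le> N" "P s = Max A" by auto
  have smax: "m \<le> N \<Longrightarrow> P m \<le> P s" for m unfolding s(2) A_def by (intro Max_ge) auto
  have "P 0 \<le> P s" using smax by simp
  then have Ps0: "0 \<le> P s" by (simp add: P_def)
  have PN: "P N < 0" using neg N c unfolding P_def by (smt (verit) mult_pos_pos of_nat_0_less_iff)
  have sN: "s < N" using s(1) Ps0 PN by (metis le_neq_implies_less not_le)
  have split: "P (s + m) = P s + (\<Sum>t<m. a (s+t))" for m unfolding P_def by (rule sum_add_split)
  have part2: "\<forall>m. s + m \<le> N \<longrightarrow> (\<Sum>t<m. a (s+t)) \<le> 0" using smax split by (metis add_le_same_cancel1)
  have "(\<Sum>t<N-s. - K2) \<le> (\<Sum>t<N-s. a (s+t))"
  proof (intro sum_mono)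
    fix t assume "t \<in> {..<N-s}"
    then have "s + t < N" by auto
    then show "- K2 \<le> a (s+t)" using ab by (auto simp: abs_le_iff)
  qed
  then have "- (real (N - s) * K2) \<le> (\<Sum>t<N-s. a (s+t))" by simp
  moreover have "P N = P s + (\<Sum>t<N-s. a (s+t))" using split[of "N - s"] sN by simp
  ultimately have "real N * c \<le> real (N - s) * K2" using neg Ps0 unfolding P_def by linarith
  then show ?thesis using sN part2 by blast
qed

context setting begin

definition Hs :: "real \<Rightarrow> 'a \<Rightarrow> (nat \<Rightarrow> 'u) \<Rightarrow> real" where
  "Hs \<alpha> y u = (\<Sum>t. \<alpha>^t * k (traj f y u t) (u t))"

lemma h_disc_eq: "h_disc Y U f k \<alpha> y = (1 - \<alpha>) * (INF u\<in>Uinf Y U f y. Hs \<alpha> y u)"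
  unfolding h_disc_def Hs_def by simp

lemma Uinf_ne: "y \<in> Y \<Longrightarrow> Uinf Y U f y \<noteq> {}"
  using exists_control Uinf_iff by blast

lemma kbound0: "\<exists>K. K \<ge> 0 \<and> (\<forall>y u. (y, u) \<in> G \<longrightarrow> \<bar>k y u\<bar> \<le> K)"
proof -
  obtain K where K: "\<forall>p\<in>G. \<bar>k (fst p) (snd p)\<bar> \<le> K" using kbound by blast
  have "K \<ge> 0" using K G_point by force
  then show ?thesis using K by force
qed

lemma Hs_props:
  assumes y: "y \<in> Y" and u: "u \<in> Uinf Y U f y" and a0: "0 \<le> \<alpha>" and a1: "\<alpha> < 1"
  shows "summable (\<lambda>t. \<alpha>^t * k (traj f y u t) (u t))" "\<exists>K. \<bar>Hs \<alpha> y u\<bar> \<le> K / (1 - \<alpha>) \<and> K \<ge> 0 \<and> (\<forall>y u. (y, u) \<in> G \<longrightarrow> \<bar>k y u\<bar> \<le> K)"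
proof -
  obtain K where K: "K \<ge> 0" "\<forall>y u. (y, u) \<in> G \<longrightarrow> \<bar>k y u\<bar> \<le> K" using kbound0 by blast
  have uG: "\<forall>t. (traj f y u t, u t) \<in> G" using Uinf_iff[OF y] u by simp
  have B: "\<bar>k (traj f y u t) (u t)\<bar> \<le> K" for t using K uG by blast
  show "summable (\<lambda>t. \<alpha>^t * k (traj f y u t) (u t))" by (rule disc_summable[of "\<lambda>t. k (traj f y u t) (u t)" K, OF B a0 a1])
  show "\<exists>K. \<bar>Hs \<alpha> y u\<bar> \<le> K / (1 - \<alpha>) \<and> K \<ge> 0 \<and> (\<forall>y u. (y, u) \<in> G \<longrightarrow> \<bar>k y u\<bar> \<le> K)"
    using disc_bound[of "\<lambda>t. k (traj f y u t) (u t)" K, OF B a0 a1] K unfolding Hs_def by blast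
qed

lemma Hs_bdd:
  assumes y: "y \<in> Y" and a0: "0 \<le> \<alpha>" and a1: "\<alpha> < 1"
  shows "bdd_below (Hs \<alpha> y ` Uinf Y U f y)"
proof -
  obtain K where K: "K \<ge> 0" "\<forall>y u. (y, u) \<in> G \<longrightarrow> \<bar>k y u\<bar> \<le> K" using kbound0 by blast
  show ?thesis
  proof (rule bdd_belowI2)
    fix u assume u: "u \<in> Uinf Y U f y"
    have uG: "\<forall>t. (traj f y u t, u t) \<in> G" using Uinf_iff[OF y] u by simp
    have B: "\<bar>k (traj f y u t) (u t)\<bar> \<le> K" for t using K uG by blast
    show "- (K / (1 - \<alpha>)) \<le> Hs \<alpha> y u" using disc_bound[of "\<lambda>t. k (traj f y u t) (u t)" K, OF B a0 a1] unfolding Hs_def by (simp add: abs_le_iff)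
  qed
qed

lemma Hs_cons:
  assumes yu: "(y, u) \<in> G" and w: "w \<in> Uinf Y U f (f y u)" and a0: "0 \<le> \<alpha>" and a1: "\<alpha> < 1"
  shows "case_nat u w \<in> Uinf Y U f y" "Hs \<alpha> y (case_nat u w) = k y u + \<alpha> * Hs \<alpha> (f y u) w"
proof -
  have y: "y \<in> Y" and fy: "f y u \<in> Y" using yu by (auto simp: memG)
  have wG: "\<forall>t. (traj f (f y u) w t, w t) \<in> G" using Uinf_iff[OF fy] w by simp
  have cG: "\<forall>t. (traj f y (case_nat u w) t, case_nat u w t) \<in> G"
  proof
    fix t show "(traj f y (case_nat u w) t, case_nat u w t) \<in> G"
      using yu wG by (cases t) (auto simp: traj_cons simp del: traj.simps(2))
  qed
  then show c: "case_nat u w \<in> Uinf Y U f y" using Uinf_iff[OF y] by simp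
  let ?g = "\<lambda>t. \<alpha>^t * k (traj f y (case_nat u w) t) (case_nat u w t)"
  have sg: "summable ?g" using Hs_props(1)[OF y c a0 a1] .
  have sw: "summable (\<lambda>t. \<alpha>^t * k (traj f (f y u) w t) (w t))" using Hs_props(1)[OF fy w a0 a1] .
  have "(\<Sum>t. ?g (Suc t)) = suminf ?g - ?g 0" by (rule suminf_split_head[OF sg])
  moreover have "(\<Sum>t. ?g (Suc t)) = \<alpha> * Hs \<alpha> (f y u) w"
  proof -
    have "(\<lambda>t. ?g (Suc t)) = (\<lambda>t. \<alpha> * (\<alpha>^t * k (traj f (f y u) w t) (w t)))"
      by (rule ext) (simp only: traj_cons power_Suc nat.case mult.assoc)
    then show ?thesis unfolding Hs_def using suminf_mult[OF sw, of \<alpha>] by simp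
  qed
  ultimately show "Hs \<alpha> y (case_nat u w) = k y u + \<alpha> * Hs \<alpha> (f y u) w" unfolding Hs_def by simp
qed

lemma h_step:
  assumes yu: "(y, u) \<in> G" and a0: "0 < \<alpha>" and a1: "\<alpha> < 1"
  shows "h_disc Y U f k \<alpha> y \<le> (1 - \<alpha>) * k y u + \<alpha> * h_disc Y U f k \<alpha> (f y u)"
proof -
  have y: "y \<in> Y" and fy: "f y u \<in> Y" using yu by (auto simp: memG)
  let ?Iy = "INF c\<in>Uinf Y U f y. Hs \<alpha> y c"
  let ?If = "INF w\<in>Uinf Y U f (f y u). Hs \<alpha> (f y u) w"
  have "(?Iy - k y u) / \<alpha> \<le> ?If"
  proof (rule cINF_greatest[OF Uinf_ne[OF fy]])
    fix w assume w: "w \<in> Uinf Y U f (f y u)"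
    have "?Iy \<le> Hs \<alpha> y (case_nat u w)"
      by (rule cINF_lower[OF Hs_bdd[OF y] Hs_cons(1)[OF yu w]]) (use a0 a1 in auto)
    also have "\<dots> = k y u + \<alpha> * Hs \<alpha> (f y u) w" using Hs_cons(2)[OF yu w] a0 a1 by simp
    finally show "(?Iy - k y u) / \<alpha> \<le> Hs \<alpha> (f y u) w" using a0 by (simp add: pos_divide_le_eq mult.commute)
  qed
  then have "?Iy \<le> k y u + \<alpha> * ?If" using a0 by (simp add: pos_divide_le_eq mult.commute)
  then have "(1 - \<alpha>) * ?Iy \<le> (1 - \<alpha>) * (k y u + \<alpha> * ?If)" using a1 by (intro mult_left_mono) auto
  then show ?thesis unfolding h_disc_eq by (simp add: algebra_simps)
qed

lemma hM:
  assumes lim: "\<forall>y0\<in>Y. ((\<lambda>\<alpha>. h_disc Y U f k \<alpha> y0) \<longlongrightarrow> h y0) (at_left 1)"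
    and yu: "(y, u) \<in> G"
  shows "h y \<le> h (f y u)"
proof -
  have y: "y \<in> Y" and fy: "f y u \<in> Y" using yu by (auto simp: memG)
  have l1: "((\<lambda>\<alpha>. h_disc Y U f k \<alpha> y) \<longlongrightarrow> h y) (at_left 1)" using lim y by blast
  have l2: "((\<lambda>\<alpha>. (1 - \<alpha>) * k y u + \<alpha> * h_disc Y U f k \<alpha> (f y u)) \<longlongrightarrow> (1 - 1) * k y u + 1 * h (f y u)) (at_left (1::real))"
    using lim fy by (intro tendsto_intros) auto
  have ev: "\<forall>\<^sub>F \<alpha> in at_left (1::real). h_disc Y U f k \<alpha> y \<le> (1 - \<alpha>) * k y u + \<alpha> * h_disc Y U f k \<alpha> (f y u)"
    using eventually_at_left_real[of 0 "1::real", OF zero_less_one] by eventually_elim (auto intro: h_step[OF yu])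
  show ?thesis using tendsto_le[OF trivial_limit_at_left_real l2 l1 ev] by simp
qed

lemma UB_h:
  assumes lim: "\<forall>y0\<in>Y. ((\<lambda>\<alpha>. h_disc Y U f k \<alpha> y0) \<longlongrightarrow> h y0) (at_left 1)"
    and y0: "y0 \<in> Y" and fe: "feasible y0 \<mu> \<psi> \<eta>"
  shows "\<mu> \<le> h y0"
proof -
  obtain B where B: "\<forall>y\<in>Y. \<bar>\<eta> y\<bar> \<le> B" using cont_bound fe unfolding feasible_def by blast
  have bnd: "\<mu> - 2 * B * (1 - \<alpha>) \<le> h_disc Y U f k \<alpha> y0" if a0: "0 < \<alpha>" and a1: "\<alpha> < 1" for \<alpha>
  proof -
    have "\<mu> / (1 - \<alpha>) - 2 * B \<le> (INF u\<in>Uinf Y U f y0. Hs \<alpha> y0 u)"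
    proof (rule cINF_greatest[OF Uinf_ne[OF y0]])
      fix u assume u: "u \<in> Uinf Y U f y0"
      let ?x = "traj f y0 u"
      have uG: "\<forall>t. (?x t, u t) \<in> G" using Uinf_iff[OF y0] u by simp
      have xY: "?x t \<in> Y" for t using trajG_Y[of "Suc t" y0 u t] uG y0 by auto
      have ft: "\<mu> + \<eta> (?x t) - \<eta> (?x (Suc t)) \<le> k (?x t) (u t)" for t
        using feasible_traj[OF fe y0, of "Suc t" u] uG by auto
      have Bt: "\<bar>\<eta> (?x t)\<bar> \<le> B" for t using B xY by blast
      have Bt1: "\<bar>\<eta> (?x (Suc t))\<bar> \<le> B" for t using B xY by blast
      have s1: "summable (\<lambda>t. \<alpha>^t * \<eta> (?x t))" using disc_summable[of "\<lambda>t. \<eta> (?x t)" B, OF Bt] a0 a1 by simp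
      have s2: "summable (\<lambda>t. \<alpha>^t * \<eta> (?x (Suc t)))" using disc_summable[of "\<lambda>t. \<eta> (?x (Suc t))" B, OF Bt1] a0 a1 by simp
      have s3: "summable (\<lambda>t. \<mu> * \<alpha>^t)" using a0 a1 by (intro summable_mult summable_geometric) simp
      have sk: "summable (\<lambda>t. \<alpha>^t * k (?x t) (u t))" using Hs_props(1)[OF y0 u] a0 a1 by simp
      have b2: "\<bar>\<Sum>t. \<alpha>^t * \<eta> (?x (Suc t))\<bar> \<le> B / (1 - \<alpha>)" using disc_bound[of "\<lambda>t. \<eta> (?x (Suc t))" B, OF Bt1] a0 a1 by simp
      define S1 where "S1 = (\<Sum>t. \<alpha>^t * \<eta> (?x t))"
      define S2 where "S2 = (\<Sum>t. \<alpha>^t * \<eta> (?x (Suc t)))"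
      define Sk where "Sk = (\<Sum>t. \<alpha>^t * k (?x t) (u t))"
      define Ls where "Ls = (\<Sum>t. \<mu> * \<alpha>^t + (\<alpha>^t * \<eta> (?x t) - \<alpha>^t * \<eta> (?x (Suc t))))"
      have e3: "S1 = \<eta> y0 + \<alpha> * S2"
      proof -
        have "(\<Sum>t. \<alpha>^(Suc t) * \<eta> (?x (Suc t))) = S1 - \<eta> y0"
          using suminf_split_head[OF s1] unfolding S1_def by simp
        moreover have "(\<Sum>t. \<alpha>^(Suc t) * \<eta> (?x (Suc t))) = \<alpha> * S2"
          using suminf_mult[OF s2, of \<alpha>] unfolding S2_def by (simp add: mult.assoc del: traj.simps)
        ultimately show ?thesis by simp
      qed
      have e1: "Ls \<le> Sk" unfolding Ls_def Sk_def
      proof (rule suminf_le)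
        fix t
        have "\<alpha>^t * (\<mu> + \<eta> (?x t) - \<eta> (?x (Suc t))) \<le> \<alpha>^t * k (?x t) (u t)"
          using ft[of t] a0 by (intro mult_left_mono) auto
        then show "\<mu> * \<alpha>^t + (\<alpha>^t * \<eta> (?x t) - \<alpha>^t * \<eta> (?x (Suc t))) \<le> \<alpha>^t * k (?x t) (u t)"
          by (simp add: algebra_simps del: traj.simps)
        show "summable (\<lambda>t. \<mu> * \<alpha>^t + (\<alpha>^t * \<eta> (?x t) - \<alpha>^t * \<eta> (?x (Suc t))))"
          by (intro summable_add summable_diff s1 s2 s3)
      qed (rule sk)
      have e2: "Ls = \<mu> / (1 - \<alpha>) + (S1 - S2)"
      proof -
        have "Ls = (\<Sum>t. \<mu> * \<alpha>^t) + (\<Sum>t. (\<alpha>^t * \<eta> (?x t) - \<alpha>^t * \<eta> (?x (Suc t))))"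
          unfolding Ls_def by (rule suminf_add[symmetric]) (intro summable_diff s1 s2 s3)+
        also have "(\<Sum>t. (\<alpha>^t * \<eta> (?x t) - \<alpha>^t * \<eta> (?x (Suc t)))) = S1 - S2"
          unfolding S1_def S2_def by (rule suminf_diff[symmetric, OF s1 s2])
        also have "(\<Sum>t. \<mu> * \<alpha>^t) = \<mu> / (1 - \<alpha>)" using a0 a1 by (simp add: suminf_mult suminf_geometric)
        finally show ?thesis .
      qed
      have e4: "\<bar>\<eta> y0\<bar> \<le> B" using B y0 by blast
      have "(1 - \<alpha>) * \<bar>S2\<bar> \<le> B"
        using b2 a1 unfolding S2_def by (simp add: pos_le_divide_eq mult.commute)
      moreover have "(1 - \<alpha>) * S2 \<le> (1 - \<alpha>) * \<bar>S2\<bar>" using a1 by (intro mult_left_mono) auto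
      ultimately have e5: "(1 - \<alpha>) * S2 \<le> B" by linarith
      have e6: "S1 - S2 = \<eta> y0 - (1 - \<alpha>) * S2" using e3 by (simp add: algebra_simps)
      have "\<mu> / (1 - \<alpha>) - 2 * B \<le> Sk" using e1 e2 e4 e5 e6 by (simp add: abs_le_iff)
      then show "\<mu> / (1 - \<alpha>) - 2 * B \<le> Hs \<alpha> y0 u" unfolding Hs_def Sk_def .
    qed
    then have "(1 - \<alpha>) * (\<mu> / (1 - \<alpha>) - 2 * B) \<le> h_disc Y U f k \<alpha> y0"
      unfolding h_disc_eq using a1 by (intro mult_left_mono) auto
    moreover have "(1 - \<alpha>) * (\<mu> / (1 - \<alpha>) - 2 * B) = \<mu> - 2 * B * (1 - \<alpha>)"
    proof -
      have "(1 - \<alpha>) * (\<mu> / (1 - \<alpha>)) = \<mu>" using a1 by simp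
      then show ?thesis by (simp add: right_diff_distrib mult.commute)
    qed
    ultimately show ?thesis by simp
  qed
  have l1: "((\<lambda>\<alpha>. h_disc Y U f k \<alpha> y0) \<longlongrightarrow> h y0) (at_left 1)" using lim y0 by blast
  have l2: "((\<lambda>\<alpha>. \<mu> - 2 * B * (1 - \<alpha>)) \<longlongrightarrow> \<mu> - 2 * B * (1 - 1)) (at_left (1::real))"
    by (intro tendsto_intros)
  have ev: "\<forall>\<^sub>F \<alpha> in at_left (1::real). \<mu> - 2 * B * (1 - \<alpha>) \<le> h_disc Y U f k \<alpha> y0"
    using eventually_at_left_real[of 0 "1::real", OF zero_less_one] by eventually_elim (auto intro: bnd)
  show ?thesis using tendsto_le[OF trivial_limit_at_left_real l1 l2 ev] by simp
qed

end

context setting begin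

lemma h_mono_traj:
  assumes lim: "\<forall>y0\<in>Y. ((\<lambda>\<alpha>. h_disc Y U f k \<alpha> y0) \<longlongrightarrow> h y0) (at_left 1)"
    and uG: "\<forall>t<N. (traj f z u t, u t) \<in> G"
  shows "s \<le> N \<Longrightarrow> h z \<le> h (traj f z u s)"
proof (induction s)
  case 0 then show ?case by simp
next
  case (Suc s)
  then have "(traj f z u s, u s) \<in> G" using uG by simp
  then have "h (traj f z u s) \<le> h (traj f z u (Suc s))" using hM[OF lim] by simp
  then show ?case using Suc by simp
qed

lemma A0h:
  assumes lim: "\<forall>y0\<in>Y. ((\<lambda>\<alpha>. h_disc Y U f k \<alpha> y0) \<longlongrightarrow> h y0) (at_left 1)"
    and hc: "continuous_on Y h" and z: "z \<in> Y" and e: "e > 0"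
  shows "\<exists>N>0. \<forall>u. (\<forall>t<N. (traj f z u t, u t) \<in> G) \<longrightarrow> real N * (h z - e) \<le> (\<Sum>t<N. k (traj f z u t) (u t))"
proof (rule ccontr)
  assume neg: "\<not> ?thesis"
  have bad: "\<exists>u. (\<forall>t<N. (traj f z u t, u t) \<in> G) \<and> (\<Sum>t<N. k (traj f z u t) (u t)) < real N * (h z - e)"
    if N: "0 < N" for N
  proof -
    from neg N have "\<not> (\<forall>u. (\<forall>t<N. (traj f z u t, u t) \<in> G) \<longrightarrow> real N * (h z - e) \<le> (\<Sum>t<N. k (traj f z u t) (u t)))"
      by blast
    then show ?thesis by (auto simp: not_le)
  qed
  obtain K where K: "K \<ge> 0" "\<forall>y u. (y, u) \<in> G \<longrightarrow> \<bar>k y u\<bar> \<le> K" using kbound0 by blast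
  define c where "c = h z - e/2"
  define K2 where "K2 = K + \<bar>c\<bar> + 1"
  have K2: "K2 > 0" using K by (simp add: K2_def add_nonneg_pos)
  have kc: "(y, u) \<in> G \<Longrightarrow> \<bar>k y u - c\<bar> \<le> K2" for y u using K unfolding K2_def by force
  have long: "\<exists>x v. h z \<le> h (x 0) \<and> (\<forall>t<j. (x t, v t) \<in> G) \<and> (\<forall>t. Suc t < j \<longrightarrow> x (Suc t) = f (x t) (v t))
                 \<and> (\<forall>m\<le>j. (\<Sum>t<m. k (x t) (v t) - c) \<le> 0)" for j
  proof -
    define N where "N = Suc (nat \<lceil>real j * K2 / (e/2)\<rceil>)"
    have N0: "0 < N" by (simp add: N_def)
    have "real j * K2 / (e/2) \<le> real N" unfolding N_def by linarith
    then have NK: "real j * K2 \<le> real N * (e/2)" using e by (simp add: pos_divide_le_eq)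
    obtain u where uG: "\<forall>t<N. (traj f z u t, u t) \<in> G"
      and us: "(\<Sum>t<N. k (traj f z u t) (u t)) < real N * (h z - e)" using bad[OF N0] by blast
    define a where "a t = k (traj f z u t) (u t) - c" for t
    have ab: "\<forall>t<N. \<bar>a t\<bar> \<le> K2" using uG kc unfolding a_def by blast
    have "(\<Sum>t<N. a t) = (\<Sum>t<N. k (traj f z u t) (u t)) - real N * c"
      unfolding a_def by (simp add: sum_subtractf)
    then have aneg: "(\<Sum>t<N. a t) \<le> - (real N * (e/2))" using us unfolding c_def by (simp add: algebra_simps)
    obtain s where s: "s < N" "real N * (e/2) \<le> real (N - s) * K2"
      "\<forall>m. s + m \<le> N \<longrightarrow> (\<Sum>t<m. a (s+t)) \<le> 0"
      using argmax[OF N0 ab aneg] e by auto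
    have "real j * K2 \<le> real (N - s) * K2" using NK s(2) by linarith
    then have jle: "j \<le> N - s" using K2 by simp
    show ?thesis
    proof (intro exI[of _ "\<lambda>t. traj f z u (s+t)"] exI[of _ "\<lambda>t. u (s+t)"] conjI allI impI)
      show "h z \<le> h (traj f z u (s + 0))" using h_mono_traj[OF lim uG, of s] s(1) by simp
      fix t assume "t < j"
      then show "(traj f z u (s + t), u (s + t)) \<in> G" using uG jle by simp
    next
      fix t assume "Suc t < j"
      show "traj f z u (s + Suc t) = f (traj f z u (s + t)) (u (s + t))" by simp
    next
      fix m assume "m \<le> j"
      then have "s + m \<le> N" using jle s(1) by linarith
      then have "(\<Sum>t<m. a (s+t)) \<le> 0" using s(3) by blast
      then show "(\<Sum>t<m. k (traj f z u (s + t)) (u (s + t)) - c) \<le> 0" unfolding a_def by simp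
    qed
  qed
  then have "\<exists>X. \<forall>j. \<exists>v. h z \<le> h (X j 0) \<and> (\<forall>t<j. (X j t, v t) \<in> G) \<and> (\<forall>t. Suc t < j \<longrightarrow> X j (Suc t) = f (X j t) (v t))
                 \<and> (\<forall>m\<le>j. (\<Sum>t<m. k (X j t) (v t) - c) \<le> 0)"
    by (intro choice allI) blast
  then obtain X where "\<forall>j. \<exists>v. h z \<le> h (X j 0) \<and> (\<forall>t<j. (X j t, v t) \<in> G) \<and> (\<forall>t. Suc t < j \<longrightarrow> X j (Suc t) = f (X j t) (v t))
                 \<and> (\<forall>m\<le>j. (\<Sum>t<m. k (X j t) (v t) - c) \<le> 0)" ..
  then have "\<exists>V. \<forall>j. h z \<le> h (X j 0) \<and> (\<forall>t<j. (X j t, V j t) \<in> G) \<and> (\<forall>t. Suc t < j \<longrightarrow> X j (Suc t) = f (X j t) (V j t))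
                 \<and> (\<forall>m\<le>j. (\<Sum>t<m. k (X j t) (V j t) - c) \<le> 0)"
    by (rule choice)
  then obtain V where XV: "\<forall>j. h z \<le> h (X j 0) \<and> (\<forall>t<j. (X j t, V j t) \<in> G) \<and> (\<forall>t. Suc t < j \<longrightarrow> X j (Suc t) = f (X j t) (V j t))
                 \<and> (\<forall>m\<le>j. (\<Sum>t<m. k (X j t) (V j t) - c) \<le> 0)" ..
  obtain p0 where p0: "p0 \<in> G" using G_point by blast
  define s where "s j t = (if t < j then (X j t, V j t) else p0)" for j t
  have sG: "s j t \<in> G" for j t using XV p0 unfolding s_def by auto
  obtain r q where r: "strict_mono r" and q: "\<And>t. (\<lambda>j. s (r j) t) \<longlonglongrightarrow> q t" "\<And>t. q t \<in> G"
    using diag_compact[of G s, OF G_compact sG] by blast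
  have rj: "j \<le> r j" for j using seq_suble[OF r] .
  have sr: "t < j \<Longrightarrow> s (r j) t = (X (r j) t, V (r j) t)" for j t using rj[of j] unfolding s_def by simp
  have qS: "fst (q (Suc t)) = f (fst (q t)) (snd (q t))" for t
  proof -
    have A: "(\<lambda>j. fst (s (r j) (Suc t))) \<longlonglongrightarrow> fst (q (Suc t))" using tendsto_fst[OF q(1)] .
    have B: "(\<lambda>j. f (fst (s (r j) t)) (snd (s (r j) t))) \<longlonglongrightarrow> f (fst (q t)) (snd (q t))"
      using f_tendsto[OF q(1) q(2), of t] sG by simp
    have "\<forall>\<^sub>F j in sequentially. f (fst (s (r j) t)) (snd (s (r j) t)) = fst (s (r j) (Suc t))"
      unfolding eventually_sequentially
    proof (intro exI[of _ "Suc (Suc t)"] allI impI)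
      fix j assume j: "Suc (Suc t) \<le> j"
      then have "Suc t < r j" using rj[of j] by simp
      then show "f (fst (s (r j) t)) (snd (s (r j) t)) = fst (s (r j) (Suc t))"
        using sr[of t j] sr[of "Suc t" j] j XV by simp
    qed
    from Lim_transform_eventually[OF B this] A show ?thesis using LIMSEQ_unique by blast
  qed
  have pref: "(\<Sum>t<m. k (fst (q t)) (snd (q t)) - c) \<le> 0" for m
  proof -
    have L: "(\<lambda>j. \<Sum>t<m. k (fst (s (r j) t)) (snd (s (r j) t)) - c) \<longlonglongrightarrow> (\<Sum>t<m. k (fst (q t)) (snd (q t)) - c)"
      by (intro tendsto_sum tendsto_diff tendsto_const k_tendsto[OF q(1) q(2)] sG)
    show ?thesis
    proof (rule LIMSEQ_le_const2[OF L], intro exI[of _ m] allI impI)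
      fix j assume mj: "m \<le> j"
      have "(\<Sum>t<m. k (fst (s (r j) t)) (snd (s (r j) t)) - c) = (\<Sum>t<m. k (X (r j) t) (V (r j) t) - c)"
        using sr mj by (intro sum.cong) auto
      also have "\<dots> \<le> 0" using XV mj rj[of j] by simp
      finally show "(\<Sum>t<m. k (fst (s (r j) t)) (snd (s (r j) t)) - c) \<le> 0" .
    qed
  qed
  define w where "w = fst (q 0)"
  have wY: "w \<in> Y" using q(2)[of 0] unfolding w_def by (cases "q 0") (auto simp: memG)
  have hw: "h z \<le> h w"
  proof -
    have sY: "fst (s j 0) \<in> Y" for j using sG[of j 0] by (cases "s j 0") (auto simp: memG)
    have "(\<lambda>j. h (fst (s (r j) 0))) \<longlonglongrightarrow> h w"
      unfolding w_def using continuous_on_tendsto_compose[OF hc tendsto_fst[OF q(1)]] wY sY unfolding w_def by simp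
    then show ?thesis
    proof (rule LIMSEQ_le_const, intro exI[of _ 1] allI impI)
      fix j :: nat assume "1 \<le> j"
      then show "h z \<le> h (fst (s (r j) 0))" using sr[of 0 j] XV by simp
    qed
  qed
  define v where "v t = snd (q t)" for t
  have tr: "traj f w v t = fst (q t)" for t
    by (induction t) (simp_all add: w_def v_def qS)
  have vU: "v \<in> Uinf Y U f w" using Uinf_iff[OF wY] tr q(2) by (simp add: v_def)
  have hdc: "h_disc Y U f k \<alpha> w \<le> c" if a0: "0 < \<alpha>" and a1: "\<alpha> < 1" for \<alpha>
  proof -
    define a where "a t = k (fst (q t)) (snd (q t)) - c" for t
    have ab: "\<bar>a t\<bar> \<le> K2" for t using kc q(2)[of t] unfolding a_def by (cases "q t") auto
    have sa: "summable (\<lambda>t. \<alpha>^t * a t)" using disc_summable[of a K2, OF ab] a0 a1 by simp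
    have sc: "summable (\<lambda>t. c * \<alpha>^t)" using a0 a1 by (intro summable_mult summable_geometric) simp
    have "(\<Sum>t. \<alpha>^t * a t) \<le> 0"
      by (rule suminf_le_const[OF sa]) (rule abel, use a0 a1 pref in \<open>auto simp: a_def\<close>)
    moreover have "Hs \<alpha> w v = (\<Sum>t. \<alpha>^t * a t) + c / (1 - \<alpha>)"
    proof -
      have "Hs \<alpha> w v = (\<Sum>t. \<alpha>^t * a t + c * \<alpha>^t)"
        unfolding Hs_def tr a_def by (simp add: v_def algebra_simps)
      also have "\<dots> = (\<Sum>t. \<alpha>^t * a t) + (\<Sum>t. c * \<alpha>^t)" by (rule suminf_add[symmetric, OF sa sc])
      also have "(\<Sum>t. c * \<alpha>^t) = c / (1 - \<alpha>)" using a0 a1 by (simp add: suminf_mult suminf_geometric)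
      finally show ?thesis .
    qed
    ultimately have Hle: "Hs \<alpha> w v \<le> c / (1 - \<alpha>)" by simp
    have "(INF u\<in>Uinf Y U f w. Hs \<alpha> w u) \<le> Hs \<alpha> w v"
      by (rule cINF_lower[OF Hs_bdd[OF wY] vU]) (use a0 a1 in auto)
    then have "h_disc Y U f k \<alpha> w \<le> (1 - \<alpha>) * (c / (1 - \<alpha>))"
      unfolding h_disc_eq using Hle a1 by (intro mult_left_mono) auto
    then show ?thesis using a1 by simp
  qed
  have "h w \<le> c"
  proof (rule tendsto_le[OF trivial_limit_at_left_real tendsto_const])
    show "((\<lambda>\<alpha>. h_disc Y U f k \<alpha> w) \<longlongrightarrow> h w) (at_left 1)" using lim wY by blast
    show "\<forall>\<^sub>F \<alpha> in at_left (1::real). h_disc Y U f k \<alpha> w \<le> c"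
      using eventually_at_left_real[of 0 "1::real", OF zero_less_one] by eventually_elim (auto intro: hdc)
  qed
  then show False using hw e unfolding c_def by simp
qed

lemma partB:
  assumes lim: "\<forall>y0\<in>Y. ((\<lambda>\<alpha>. h_disc Y U f k \<alpha> y0) \<longlongrightarrow> h y0) (at_left 1)"
    and hc: "continuous_on Y h" and y0: "y0 \<in> Y"
  shows "h y0 = dstar Y U f k y0"
proof (rule dstar_eq[OF hc _ _ y0])
  show "\<And>y u. (y, u) \<in> G \<Longrightarrow> h y \<le> h (f y u)" using hM[OF lim] by blast
  show "\<forall>z\<in>Y. \<forall>e>0. \<exists>N>0. \<forall>u. (\<forall>t<N. (traj f z u t, u t) \<in> G) \<longrightarrow>
                 real N * (h z - e) \<le> (\<Sum>t<N. k (traj f z u t) (u t))"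
    using A0h[OF lim hc] by blast
  show "\<And>\<mu> \<psi> \<eta>. feasible y0 \<mu> \<psi> \<eta> \<Longrightarrow> \<mu> \<le> h y0" using UB_h[OF lim y0] by blast
qed

end

theorem theorem4p2:
  fixes Y :: "'a::euclidean_space set"
    and U0 :: "'u::metric_space set"
    and U :: "'a \<Rightarrow> 'u set"
    and f :: "'a \<Rightarrow> 'u \<Rightarrow> 'a"
    and k :: "'a \<Rightarrow> 'u \<Rightarrow> real"
  assumes "Y \<noteq> {}" and "compact Y"
    and "compact U0"
    and "\<forall>y\<in>Y. U y \<subseteq> U0 \<and> compact (U y)"
    and "usc_on Y U"
    and "continuous_on (UNIV \<times> U0) (\<lambda>(y, u). f y u)"
    and "continuous_on (UNIV \<times> U0) (\<lambda>(y, u). k y u)"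
    and "\<forall>y\<in>Y. adm Y U f y \<noteq> {}"
  shows "(\<forall>V. (\<forall>y0\<in>Y. (\<lambda>T. VT Y U f k T y0) \<longlonglongrightarrow> V y0) \<and> continuous_on Y V
            \<longrightarrow> (\<forall>y0\<in>Y. V y0 = dstar Y U f k y0)) \<and>
         (\<forall>h. (\<forall>y0\<in>Y. ((\<lambda>\<alpha>. h_disc Y U f k \<alpha> y0) \<longlongrightarrow> h y0) (at_left 1)) \<and> continuous_on Y h
            \<longrightarrow> (\<forall>y0\<in>Y. h y0 = dstar Y U f k y0))"
proof -
  interpret setting Y U0 U f k using assms by unfold_locales
  show ?thesis using partA partB by blast
qed


end
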